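(* For all $\mathbf v\in\mathbf V_h$ one has $\|\mathbf v\|_{\mathbf V_{h,1}}\approx\|\mathbf v\|_{\mathbf V_h}$, i.e. $c\|\mathbf v\|_{\mathbf V_h}\le\|\mathbf v\|_{\mathbf V_{h,1}}\le C\|\mathbf v\|_{\mathbf V_h}$ with $c,C>0$ independent of $h$, $s$ and $\mathbf v$.
   Context: Geometry and mesh. Let $\Omega\subset\mathbb R^2$ be a bounded convex domain with Lipschitz, possibly curved boundary $\partial\Omega$ and unit outward normal $\widetilde{\mathbf n}$. $\mathcal T_h$ is a partition into polygons which is body-fitted: each boundary edge has both endpoints on $\partial\Omega$; $\overline{\Omega_h}=\bigcup_{K\in\mathcal T_h}K$. $h_K$ = diameter of $K$, $h=\max_Kh_K$; $\mathbf n$ denotes the unit outward normal on $\partial K$ and on $\partial\Omega_h$. $\mathcal E_h$ is the set of (straight) edges, $\mathcal E_h^B$ the boundary edges, $h_e$ the length of $e$, $s=\max_{e\in\mathcal E_h^B}h_e$ ($s\le h$). For $e\in\mathcal E_h^B$, $\tilde e\subset\partial\Omega$ is the arc between the endpoints of $e$. The meshes satisfy, with mesh-independent constants: (A1) each $K$ is star-shaped w.r.t. a ball $\mathcal B_K\subset K$ of radius $\rho_K\ge C_1h_K$; (A2) each $K$ has an edge with $h_e\ge C_2h_K$; (A3) $h\le C_3h_K$ for all $K$; (A4) for each $e\in\mathcal E_h^B$, in local Cartesian coordinates $(\hat x,\hat y)$ with $e=[0,h_e]\times\{0\}$, $\Gamma(\hat x,0)=(\hat x,\gamma(\hat x))$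 is a bijection $e\to\tilde e$ with $\sup|\gamma|\le C_4s^2$ and $\sup_{\hat x}|\mathbf n(\hat x,0)-\widetilde{\mathbf n}(\hat x,\gamma(\hat x))|\le C_4's$; (A5) $s\le C_5\min_{e\in\mathcal E_h^B}h_e$; (A6) for each $e\in\mathcal E_h^B$ with element $K$, the triangle $P(e)$ with base $e$ and apex the center of $\mathcal B_K$ (height $h_{K,e}$), mapped by $\hat{\mathbf x}\mapsto\mathrm{diag}(h_e^{-1},h_{K,e}^{-1})\hat{\mathbf x}$ in coordinates with $e$ on the abscissa and the height on the ordinate, becomes a triangle of diameter $O(1)$ with circumradius/inradius ratio $\le C_6$; and each point of $K$ lies in at most $M$ triangles $P(e)$, $e\subset\partial K\cap\partial\Omega_h$. Spaces and norms. Integers $\alpha,\beta\ge0$ with $\beta=\alpha$; each edge $e$ carries a fixed unit normal $\mathbf n_e$. $\mathbf V_h$ consists of $\mathbf v=\{\mathbf v_0,\mathbf v_b\}$ with $\mathbf v_0|_K\in[P_\alpha(K)]^2$, $\mathbf v_b|_e=v_b\mathbf n_e$ with $v_b\in P_\beta(e)$, and $\mathbf v_b=0$ on each $e\in\mathcal E_h^B$. On $e\in\mathcal E_h^B$ let $\widetilde{\mathbf n}(\hat x,0):=\widetilde{\mathbf n}(\Gamma(\hat x,0))$, and on interior edges $\widetilde{\mathbf n}=\mathbf n$. For fixed $\rho>0$: $\|\mathbf v\|_{\mathbf V_h}^2=\|\mathbf v_0\|_{0,\Omega_h}^2+\rho\sum_Kh_K^{-1}\|(\mathbf v_0-\mathbf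 v_b)\cdot\mathbf n\|_{0,\partial K}^2$ and $\|\mathbf v\|_{\mathbf V_{h,1}}^2=\|\mathbf v_0\|_{0,\Omega_h}^2+\rho\sum_Kh_K^{-1}\|(\mathbf v_0-\mathbf v_b)\cdot\widetilde{\mathbf n}\|_{0,\partial K}^2$. *)

theory Defs
  imports "HOL-Analysis.Analysis"
begin

text \<open>The plane R^2 is modelled by the type complex (Re = x, Im = y).
  An element K of the mesh is a polygon given by its list of vertices in
  counter-clockwise order; its edges are the segments between consecutive vertices.\<close>

type_synonym elem = "complex list"

definition nxt :: "elem \<Rightarrow> nat \<Rightarrow> complex" where
  "nxt K i = K ! (Suc i mod length K)"

definition edges :: "elem \<Rightarrow> (complex \<times> complex) set" where
  "edges K = {(K ! i, nxt K i) | i. i < length K}"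

text \<open>Twice the signed (shoelace) area; positive iff counter-clockwise.\<close>
definition signed_area2 :: "elem \<Rightarrow> real" where
  "signed_area2 K = (\<Sum>i<length K. Im (cnj (K ! i) * nxt K i))"

fun polychain :: "complex list \<Rightarrow> real \<Rightarrow> complex" where
  "polychain [] = linepath 0 0"
| "polychain [a] = linepath a a"
| "polychain [a, b] = linepath a b"
| "polychain (a # b # c # rest) = linepath a b +++ polychain (b # c # rest)"

definition polypath :: "elem \<Rightarrow> real \<Rightarrow> complex" where
  "polypath K = polychain (K @ [hd K])"

definition region :: "elem \<Rightarrow> complex set" where
  "region K = path_image (polypath K) \<union> inside (path_image (polypath K))"

definition is_ccw_polygon :: "elem \<Rightarrow> bool" where
  "is_ccw_polygon K \<longleftrightarrow> distinct K \<and> 3 \<le> length K \<and> simple_path (polypath K)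
     \<and> signed_area2 K > 0"

definition hK :: "elem \<Rightarrow> real" where
  "hK K = diameter (region K)"

text \<open>Unit outward normal of a CCW polygon on its edge from a to b.\<close>
definition onormal :: "complex \<Rightarrow> complex \<Rightarrow> complex" where
  "onormal a b = - \<i> * (b - a) / complex_of_real (cmod (b - a))"

definition elems_of_edge :: "elem set \<Rightarrow> complex set \<Rightarrow> elem set" where
  "elems_of_edge T e = {K \<in> T. \<exists>(a, b) \<in> edges K. closed_segment a b = e}"

definition Eh :: "elem set \<Rightarrow> complex set set" where
  "Eh T = {closed_segment a b | a b. \<exists>K \<in> T. (a, b) \<in> edges K}"

definition bedges :: "elem set \<Rightarrow> complex set set" where
  "bedges T = {e \<in> Eh T. card (elems_of_edge T e) = 1}"

definition smax :: "elem set \<Rightarrow> real" where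
  "smax T = Max (diameter ` bedges T)"

text \<open>Local boundary parametrisation of (A4): in local coordinates with origin at a and
  abscissa along b - a, Gamma(x) = (x, gamma(x)).\<close>
definition Gam :: "(complex set \<Rightarrow> real \<Rightarrow> real) \<Rightarrow> complex \<Rightarrow> complex \<Rightarrow> real \<Rightarrow> complex" where
  "Gam gam a b x = a + (b - a) / complex_of_real (cmod (b - a))
       * (complex_of_real x + \<i> * complex_of_real (gam (closed_segment a b) x))"

text \<open>nt is a (measurable-or-not) selection of the unit outward normal of the convex domain
  at its boundary points.\<close>
definition outward_normal_sel :: "complex set \<Rightarrow> (complex \<Rightarrow> complex) \<Rightarrow> bool" where
  "outward_normal_sel \<Omega> nt \<longleftrightarrow>
     (\<forall>p \<in> frontier \<Omega>. cmod (nt p) = 1 \<and> (\<forall>x \<in> \<Omega>. inner (nt p) (x - p) \<le> 0))"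

definition tri_area :: "complex \<Rightarrow> complex \<Rightarrow> complex \<Rightarrow> real" where
  "tri_area p q w = \<bar>Im ((q - p) * cnj (w - p))\<bar> / 2"

definition circumradius :: "complex \<Rightarrow> complex \<Rightarrow> complex \<Rightarrow> real" where
  "circumradius p q w = cmod (q - p) * cmod (w - q) * cmod (p - w) / (4 * tri_area p q w)"

definition inradius :: "complex \<Rightarrow> complex \<Rightarrow> complex \<Rightarrow> real" where
  "inradius p q w = 2 * tri_area p q w / (cmod (q - p) + cmod (w - q) + cmod (p - w))"

definition tri_diam :: "complex \<Rightarrow> complex \<Rightarrow> complex \<Rightarrow> real" where
  "tri_diam p q w = max (cmod (q - p)) (max (cmod (w - q)) (cmod (p - w)))"

text \<open>Image of the triangle P(e) (base a b, apex c) under diag(1/h_e, 1/h_{K,e}) in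
  coordinates with e on the abscissa and the foot of the height at the origin.\<close>
definition scaledP :: "complex \<Rightarrow> complex \<Rightarrow> complex \<Rightarrow> complex \<times> complex \<times> complex" where
  "scaledP a b c =
    (let he = cmod (b - a); u = (b - a) / complex_of_real he; xf = Re ((c - a) / u)
     in (complex_of_real (- xf / he), complex_of_real ((he - xf) / he), \<i>))"

definition star_ball :: "complex set \<Rightarrow> complex \<Rightarrow> real \<Rightarrow> bool" where
  "star_ball K c r \<longleftrightarrow> r > 0 \<and> ball c r \<subseteq> K
     \<and> (\<forall>y \<in> ball c r. \<forall>x \<in> K. closed_segment y x \<subseteq> K)"

definition mesh_partition :: "complex set \<Rightarrow> elem set \<Rightarrow> bool" where
  "mesh_partition \<Omega> T \<longleftrightarrow> finite T \<and> T \<noteq> {} \<and> (\<forall>K \<in> T. is_ccw_polygon K)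
     \<and> (\<forall>K \<in> T. \<forall>K' \<in> T. K \<noteq> K' \<longrightarrow> interior (region K) \<inter> interior (region K') = {})
     \<and> (\<forall>K \<in> T. \<forall>K' \<in> T. K \<noteq> K' \<longrightarrow> (\<forall>(a, b) \<in> edges K.
           open_segment a b \<inter> region K' \<noteq> {} \<longrightarrow> K' \<in> elems_of_edge T (closed_segment a b)))
     \<and> (\<forall>e \<in> Eh T. card (elems_of_edge T e) \<le> 2)
     \<and> (\<forall>K \<in> T. \<forall>(a, b) \<in> edges K. closed_segment a b \<in> bedges T \<longrightarrow>
           a \<in> frontier \<Omega> \<and> b \<in> frontier \<Omega>)"

definition mesh_ok ::
  "complex set \<Rightarrow> real \<Rightarrow> real \<Rightarrow> real \<Rightarrow> real \<Rightarrow> real \<Rightarrow> real \<Rightarrow> real \<Rightarrow> real \<Rightarrow> nat \<Rightarrow>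
   elem set \<Rightarrow> (elem \<Rightarrow> complex) \<Rightarrow> (elem \<Rightarrow> real) \<Rightarrow> (complex set \<Rightarrow> real \<Rightarrow> real) \<Rightarrow>
   (complex \<Rightarrow> complex) \<Rightarrow> bool" where
  "mesh_ok \<Omega> C1 C2 C3 C4 C4' C5 C6 C7 M T ctr rad gam nt \<longleftrightarrow>
     mesh_partition \<Omega> T
     \<comment> \<open>(A1)\<close>
     \<and> (\<forall>K \<in> T. star_ball (region K) (ctr K) (rad K) \<and> rad K \<ge> C1 * hK K)
     \<comment> \<open>(A2)\<close>
     \<and> (\<forall>K \<in> T. \<exists>(a, b) \<in> edges K. cmod (b - a) \<ge> C2 * hK K)
     \<comment> \<open>(A3)\<close>
     \<and> (\<forall>K \<in> T. \<forall>K' \<in> T. hK K' \<le> C3 * hK K)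
     \<comment> \<open>(A4)\<close>
     \<and> (\<forall>K \<in> T. \<forall>(a, b) \<in> edges K. closed_segment a b \<in> bedges T \<longrightarrow>
          (let he = cmod (b - a); g = gam (closed_segment a b) in
           continuous_on {0..he} g \<and> g 0 = 0 \<and> g he = 0 \<and>
           (\<forall>x \<in> {0..he}. Gam gam a b x \<in> frontier \<Omega> \<and> \<bar>g x\<bar> \<le> C4 * (smax T)\<^sup>2
              \<and> cmod (onormal a b - nt (Gam gam a b x)) \<le> C4' * smax T)))
     \<comment> \<open>(A5)\<close>
     \<and> (\<forall>e \<in> bedges T. smax T \<le> C5 * diameter e)
     \<comment> \<open>(A6)\<close>
     \<and> (\<forall>K \<in> T. \<forall>(a, b) \<in> edges K. closed_segment a b \<in> bedges T \<longrightarrow>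
          (case scaledP a b (ctr K) of (p, q, w) \<Rightarrow>
             tri_diam p q w \<le> C7 \<and> circumradius p q w / inradius p q w \<le> C6))
     \<and> (\<forall>K \<in> T. \<forall>z \<in> region K.
          card {(a, b) \<in> edges K. closed_segment a b \<in> bedges T
                 \<and> z \<in> convex hull {a, b, ctr K}} \<le> M)"

definition poly2_on :: "nat \<Rightarrow> complex set \<Rightarrow> (complex \<Rightarrow> real) \<Rightarrow> bool" where
  "poly2_on n S f \<longleftrightarrow> (\<exists>c :: nat \<Rightarrow> nat \<Rightarrow> real. \<forall>z \<in> S.
      f z = (\<Sum>i\<le>n. \<Sum>j\<le>n - i. c i j * Re z ^ i * Im z ^ j))"

definition poly1_seg :: "nat \<Rightarrow> complex \<Rightarrow> complex \<Rightarrow> (complex \<Rightarrow> real) \<Rightarrow> bool" where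
  "poly1_seg n a b f \<longleftrightarrow> (\<exists>c :: nat \<Rightarrow> real. \<forall>t \<in> {0..1}.
      f (a + complex_of_real t * (b - a)) = (\<Sum>j\<le>n. c j * t ^ j))"

definition edge_normals :: "elem set \<Rightarrow> (complex set \<Rightarrow> complex) \<Rightarrow> bool" where
  "edge_normals T ne \<longleftrightarrow> (\<forall>K \<in> T. \<forall>(a, b) \<in> edges K.
      cmod (ne (closed_segment a b)) = 1 \<and> inner (ne (closed_segment a b)) (b - a) = 0)"

text \<open>The space V_h with beta = alpha: v = {v0, vb}, v0 K the restriction to K,
  vb e the scalar v_b on e (so the vector is vb e * ne e), vanishing on boundary edges.\<close>
definition Vh_space :: "nat \<Rightarrow> elem set \<Rightarrow> (elem \<Rightarrow> complex \<Rightarrow> complex)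
     \<Rightarrow> (complex set \<Rightarrow> complex \<Rightarrow> real) \<Rightarrow> bool" where
  "Vh_space \<alpha> T v0 vb \<longleftrightarrow>
     (\<forall>K \<in> T. poly2_on \<alpha> (region K) (\<lambda>z. Re (v0 K z)) \<and> poly2_on \<alpha> (region K) (\<lambda>z. Im (v0 K z)))
     \<and> (\<forall>K \<in> T. \<forall>(a, b) \<in> edges K. poly1_seg \<alpha> a b (vb (closed_segment a b)))
     \<and> (\<forall>e \<in> bedges T. \<forall>z \<in> e. vb e z = 0)"

definition edge_int :: "complex \<Rightarrow> complex \<Rightarrow> (complex \<Rightarrow> real) \<Rightarrow> real" where
  "edge_int a b f = cmod (b - a) * integral {0..1} (\<lambda>t. f (a + complex_of_real t * (b - a)))"

definition Vnorm_with :: "(elem \<Rightarrow> complex \<Rightarrow> complex \<Rightarrow> complex \<Rightarrow> complex) \<Rightarrow> real \<Rightarrow> elem set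
     \<Rightarrow> (complex set \<Rightarrow> complex) \<Rightarrow> (elem \<Rightarrow> complex \<Rightarrow> complex) \<Rightarrow> (complex set \<Rightarrow> complex \<Rightarrow> real) \<Rightarrow> real" where
  "Vnorm_with nn \<rho> T ne v0 vb = sqrt (
     (\<Sum>K \<in> T. integral (region K) (\<lambda>z. (cmod (v0 K z))\<^sup>2))
     + \<rho> * (\<Sum>K \<in> T. (1 / hK K) * (\<Sum>(a, b) \<in> edges K.
         edge_int a b (\<lambda>z. (inner (v0 K z - complex_of_real (vb (closed_segment a b) z)
                                          * ne (closed_segment a b)) (nn K a b z))\<^sup>2))))"

definition Vh_norm :: "real \<Rightarrow> elem set \<Rightarrow> (complex set \<Rightarrow> complex) \<Rightarrow> (elem \<Rightarrow> complex \<Rightarrow> complex)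
     \<Rightarrow> (complex set \<Rightarrow> complex \<Rightarrow> real) \<Rightarrow> real" where
  "Vh_norm = Vnorm_with (\<lambda>K a b z. onormal a b)"

text \<open>n-tilde: on a boundary edge, the domain normal at Gamma(x,0), x the local abscissa of z;
  on interior edges, n.\<close>
definition ntil :: "elem set \<Rightarrow> (complex \<Rightarrow> complex) \<Rightarrow> (complex set \<Rightarrow> real \<Rightarrow> real)
     \<Rightarrow> complex \<Rightarrow> complex \<Rightarrow> complex \<Rightarrow> complex" where
  "ntil T nt gam a b z =
     (if closed_segment a b \<in> bedges T then nt (Gam gam a b (cmod (z - a))) else onormal a b)"

definition Vh1_norm :: "(complex \<Rightarrow> complex) \<Rightarrow> (complex set \<Rightarrow> real \<Rightarrow> real) \<Rightarrow> real \<Rightarrow> elem set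
     \<Rightarrow> (complex set \<Rightarrow> complex) \<Rightarrow> (elem \<Rightarrow> complex \<Rightarrow> complex)
     \<Rightarrow> (complex set \<Rightarrow> complex \<Rightarrow> real) \<Rightarrow> real" where
  "Vh1_norm nt gam \<rho> T = Vnorm_with (\<lambda>K a b z. ntil T nt gam a b z) \<rho> T"

end

theory Submission
  imports Defs "HOL-Computational_Algebra.Polynomial"
begin
lemma lagrange_interp:
  fixes p :: "real poly" and t :: "nat \<Rightarrow> real"
  assumes deg: "degree p \<le> n" and inj: "inj_on t {..n}"
  shows "poly p x = (\<Sum>k\<le>n. poly p (t k) * (\<Prod>j\<in>{..n}-{k}. (x - t j) / (t k - t j)))"
proof -
  define q where "q = (\<Sum>k\<le>n. smult (poly p (t k) / (\<Prod>j\<in>{..n}-{k}. (t k - t j)))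
                                 (\<Prod>j\<in>{..n}-{k}. [:- t j, 1:]))"
  have pq: "poly q y = (\<Sum>k\<le>n. poly p (t k) * (\<Prod>j\<in>{..n}-{k}. (y - t j) / (t k - t j)))" for y
    unfolding q_def by (simp add: poly_sum poly_prod prod_dividef)
  have dq: "degree q \<le> n"
    unfolding q_def
  proof (rule degree_sum_le)
    fix k assume k: "k \<in> {..n}"
    have "degree (\<Prod>j\<in>{..n}-{k}. [:- t j, 1:]) \<le> sum (degree \<circ> (\<lambda>j. [:- t j, 1:])) ({..n}-{k})"
      by (rule degree_prod_sum_le) simp
    also have "\<dots> = card ({..n}-{k})" by simp
    also have "\<dots> = n" using k by simp
    finally show "degree (smult (poly p (t k) / (\<Prod>j\<in>{..n}-{k}. (t k - t j))) (\<Prod>j\<in>{..n}-{k}. [:- t j, 1:])) \<le> n"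
      using degree_smult_le order_trans by blast
  qed simp
  have ev: "poly q (t i) = poly p (t i)" if i: "i \<le> n" for i
  proof -
    have z: "(\<Prod>j\<in>{..n}-{k}. (t i - t j) / (t k - t j)) = 0" if "k \<le> n" "k \<noteq> i" for k
      using that i by (intro prod_zero) auto
    have o: "(\<Prod>j\<in>{..n}-{i}. (t i - t j) / (t i - t j)) = 1"
    proof (rule prod.neutral, intro ballI)
      fix j assume "j \<in> {..n}-{i}"
      then have "t i \<noteq> t j" using inj i by (auto dest: inj_onD)
      then show "(t i - t j) / (t i - t j) = 1" by simp
    qed
    have "poly q (t i) = (\<Sum>k\<le>n. poly p (t k) * (\<Prod>j\<in>{..n}-{k}. (t i - t j) / (t k - t j)))"
      by (rule pq)
    also have "\<dots> = (\<Sum>k\<le>n. if k = i then poly p (t i) else 0)"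
    proof (rule sum.cong)
      fix k assume "k \<in> {..n}"
      then show "poly p (t k) * (\<Prod>j\<in>{..n}-{k}. (t i - t j) / (t k - t j)) = (if k = i then poly p (t i) else 0)"
      proof (cases "k = i")
        case True then show ?thesis using o by simp
      next
        case False then show ?thesis using z[of k] \<open>k \<in> {..n}\<close> by simp
      qed
    qed (rule refl)
    also have "\<dots> = poly p (t i)" using i by simp
    finally show ?thesis .
  qed
  have card: "card (t ` {..n}) = Suc n" using inj by (simp add: card_image)
  have "p = q"
    by (rule poly_eqI_degree[of "t ` {..n}"]) (use ev card deg dq in auto)
  then have "poly p x = poly q x" by simp
  then show ?thesis using pq[of x] by linarith
qed

lemma min_point_interval:
  fixes f :: "real \<Rightarrow> real"
  assumes "continuous_on {lo..hi} f" "lo \<le> hi"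
  shows "\<exists>t\<in>{lo..hi}. \<forall>y\<in>{lo..hi}. f t \<le> f y"
  using continuous_attains_inf[OF compact_Icc _ assms(1)] assms(2) by auto

lemma inv1d:
  fixes p :: "real poly" and A l m x :: real and n :: nat
  assumes A: "A \<ge> 0" and deg: "degree p \<le> n" and l: "l > 0" and x: "\<bar>x - m\<bar> \<le> A * l"
  shows "(poly p x)^2 \<le> ((A+1)*(n+1))^(2*n) * (n+1)^3 / l * integral {m-l..m+l} (\<lambda>t. (poly p t)^2)"
proof -
  define w where "w = l / (n+1)"
  have w: "w > 0" using l by (simp add: w_def)
  define J where "J k = {m - l + 2*real k*w .. m - l + (2*real k+1)*w}" for k :: nat
  define f where "f t = (poly p t)^2" for t
  define I where "I = integral {m-l..m+l} f"
  have fc: "continuous_on S f" for S unfolding f_def by (intro continuous_intros)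
  have Jsub: "J k \<subseteq> {m-l..m+l}" if "k \<le> n" for k
  proof -
    have "(2*real k+1)*w \<le> 2 * l"
    proof -
      have "(2*real k+1) \<le> 2 * (n+1)" using that by simp
      then have "(2*real k+1)*w \<le> 2*(n+1)*w" using w by (intro mult_right_mono) auto
      also have "\<dots> = 2 * l" unfolding w_def by (simp add: field_simps)
      finally show ?thesis .
    qed
    then have "m - l + (2*real k+1)*w \<le> m + l" by linarith
    moreover have "m - l \<le> m - l + 2*real k*w" using w by simp
    ultimately show ?thesis unfolding J_def by (intro subsetI) (simp only: atLeastAtMost_iff, linarith)
  qed
  have "\<forall>k. \<exists>t. k \<le> n \<longrightarrow> t \<in> J k \<and> (\<forall>y\<in>J k. f t \<le> f y)"
  proof
    fix k
    have "m - l + 2*real k*w \<le> m - l + (2*real k+1)*w" using w by (simp add: algebra_simps)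
    then show "\<exists>t. k \<le> n \<longrightarrow> t \<in> J k \<and> (\<forall>y\<in>J k. f t \<le> f y)"
      using min_point_interval[OF fc] unfolding J_def by blast
  qed
  then obtain t where t: "\<And>k. k \<le> n \<Longrightarrow> t k \<in> J k \<and> (\<forall>y\<in>J k. f (t k) \<le> f y)"
    by metis
  have fint: "f integrable_on S" if "S \<subseteq> {m-l..m+l}" "S = {a..b}" for S a b
    using that by (simp add: integrable_continuous_interval fc)
  have fnn: "0 \<le> f y" for y unfolding f_def by simp
  have Inn: "0 \<le> I" unfolding I_def by (rule integral_nonneg) (auto intro: fint fnn)
  have intJ: "f integrable_on J k" for k
    unfolding J_def by (simp add: integrable_continuous_interval fc)
  have intI: "f integrable_on {m-l..m+l}"
    by (simp add: integrable_continuous_interval fc)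
  have tk: "w * f (t k) \<le> I" if "k \<le> n" for k
  proof -
    have "integral (J k) (\<lambda>y. f (t k)) \<le> integral (J k) f"
      using t[OF that] intJ[of k] by (intro integral_le) (auto simp: J_def)
    moreover have "integral (J k) (\<lambda>y. f (t k)) = w * f (t k)"
      unfolding J_def using w by (simp add: algebra_simps)
    moreover have "integral (J k) f \<le> I"
      unfolding I_def using Jsub[OF that] intJ[of k] intI
      by (intro integral_subset_le) (auto intro!: fnn)
    ultimately show ?thesis by linarith
  qed
  have sep: "w \<le> \<bar>t k - t j\<bar>" if "k \<le> n" "j \<le> n" "j \<noteq> k" for j k
  proof -
    have aux: "w \<le> t b - t a" if "a < b" "a \<le> n" "b \<le> n" for a b
    proof -
      have "t a \<le> m - l + (2*real a+1)*w" "m - l + 2*real b*w \<le> t b" using t[of a] t[of b] that unfolding J_def by auto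
      moreover have "(2*real a+1)*w + w \<le> 2*real b*w"
      proof -
        have "(2*real a+2) \<le> 2*b" using that by linarith
        then have "(2*real a+2)*w \<le> (2*real b)*w" using w by (intro mult_right_mono) auto
        then show ?thesis by (simp add: algebra_simps)
      qed
      ultimately show ?thesis by linarith
    qed
    show ?thesis
    proof (cases "j < k")
      case True then show ?thesis using aux[of j k] that by auto
    next
      case False then have "k < j" using that by auto
      then show ?thesis using aux[of k j] that by auto
    qed
  qed
  have inj: "inj_on t {..n}"
    by (rule inj_onI) (use sep w in fastforce)
  have dist: "\<bar>x - t j\<bar> \<le> (A+1)*(n+1)*w" if "j \<le> n" for j
  proof -
    have "t j \<in> {m-l..m+l}" using t[OF that] Jsub[OF that] by auto
    then have "\<bar>x - t j\<bar> \<le> A*l + l" using x by auto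
    also have "\<dots> = (A+1)*(n+1)*w" unfolding w_def by (simp add: field_simps)
    finally show ?thesis .
  qed
  define B where "B = ((A+1)*(n+1))^n"
  have B0: "0 \<le> B" unfolding B_def using A by simp
  have Lk: "\<bar>\<Prod>j\<in>{..n}-{k}. (x - t j) / (t k - t j)\<bar> \<le> B" if k: "k \<le> n" for k
  proof -
    have "\<bar>\<Prod>j\<in>{..n}-{k}. (x - t j) / (t k - t j)\<bar> = (\<Prod>j\<in>{..n}-{k}. \<bar>x - t j\<bar> / \<bar>t k - t j\<bar>)"
      by (simp add: abs_prod)
    also have "\<dots> \<le> (\<Prod>j\<in>{..n}-{k}. (A+1)*(n+1))"
    proof (rule prod_mono)
      fix j assume j: "j \<in> {..n}-{k}"
      have "\<bar>x - t j\<bar> / \<bar>t k - t j\<bar> \<le> ((A+1)*(n+1)*w) / w"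
        using sep[of k j] dist[of j] j k w by (intro frac_le) auto
      also have "\<dots> = (A+1)*(n+1)" using w by simp
      finally show "0 \<le> \<bar>x - t j\<bar> / \<bar>t k - t j\<bar> \<and> \<bar>x - t j\<bar> / \<bar>t k - t j\<bar> \<le> (A+1)*(n+1)" by simp
    qed
    also have "\<dots> = B" unfolding B_def using k by simp
    finally show ?thesis .
  qed
  define S where "S = sqrt (I / w)"
  have S: "\<bar>poly p (t k)\<bar> \<le> S" if "k \<le> n" for k
  proof -
    have "f (t k) \<le> I / w" using tk[OF that] w by (simp add: field_simps)
    then have "sqrt (f (t k)) \<le> S" unfolding S_def by (rule real_sqrt_le_mono)
    then show ?thesis unfolding f_def by simp
  qed
  have "\<bar>poly p x\<bar> = \<bar>\<Sum>k\<le>n. poly p (t k) * (\<Prod>j\<in>{..n}-{k}. (x - t j) / (t k - t j))\<bar>"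
    by (rule arg_cong[where f=abs], rule lagrange_interp[OF deg inj])
  also have "\<dots> \<le> (\<Sum>k\<le>n. \<bar>poly p (t k) * (\<Prod>j\<in>{..n}-{k}. (x - t j) / (t k - t j))\<bar>)"
    by (rule sum_abs)
  also have "\<dots> \<le> (\<Sum>k\<le>n. S * B)"
  proof (rule sum_mono)
    fix k assume "k \<in> {..n}"
    then show "\<bar>poly p (t k) * (\<Prod>j\<in>{..n}-{k}. (x - t j) / (t k - t j))\<bar> \<le> S * B"
      using S[of k] Lk[of k] by (simp add: abs_mult mult_mono')
  qed
  also have "\<dots> = (n+1) * S * B" by simp
  finally have px: "\<bar>poly p x\<bar> \<le> (n+1) * S * B" .
  have "(poly p x)^2 \<le> ((n+1) * S * B)^2"
    using px by (metis abs_ge_zero order_trans power2_abs power_mono)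
  also have "\<dots> = (n+1)^2 * B^2 * (I / w)"
    unfolding S_def using Inn w by (simp add: power_mult_distrib)
  also have "\<dots> = ((A+1)*(n+1))^(2*n) * (n+1)^3 / l * I"
  proof -
    have B2: "B^2 = ((A+1)*(n+1))^(2*n)" unfolding B_def by (simp add: power_mult[symmetric] mult.commute)
    have gen: "(real n+1)^2 * X * (I / (l / (real n+1))) = X * (real n+1)^3 / l * I" for X
      using l by (simp add: field_simps power3_eq_cube power2_eq_square)
    show ?thesis unfolding B2 w_def using gen[of "((A+1)*(real n+1))^(2*n)"] by (simp add: add.commute)
  qed
  finally show ?thesis unfolding I_def f_def .
qed

lemma g_image_cbox:
  "(\<lambda>z. (Re z, Im z)) ` cbox u v = cbox (Re u, Im u) (Re v, Im v)"
proof
  show "(\<lambda>z. (Re z, Im z)) ` cbox u v \<subseteq> cbox (Re u, Im u) (Re v, Im v)"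
    by (auto simp: cbox_Pair_eq in_cbox_complex_iff)
next
  show "cbox (Re u, Im u) (Re v, Im v) \<subseteq> (\<lambda>z. (Re z, Im z)) ` cbox u v"
  proof
    fix p assume "p \<in> cbox (Re u, Im u) (Re v, Im v)"
    then have "Complex (fst p) (snd p) \<in> cbox u v" "p = (\<lambda>z. (Re z, Im z)) (Complex (fst p) (snd p))"
      by (auto simp: cbox_Pair_eq in_cbox_complex_iff)
    then show "p \<in> (\<lambda>z. (Re z, Im z)) ` cbox u v" by blast
  qed
qed

lemma h_image_cbox:
  "(\<lambda>p. Complex (fst p) (snd p)) ` cbox (a1, a2) (b1, b2) = cbox (Complex a1 a2) (Complex b1 b2)"
proof
  show "(\<lambda>p. Complex (fst p) (snd p)) ` cbox (a1, a2) (b1, b2) \<subseteq> cbox (Complex a1 a2) (Complex b1 b2)"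
    by (auto simp: cbox_Pair_eq in_cbox_complex_iff)
next
  show "cbox (Complex a1 a2) (Complex b1 b2) \<subseteq> (\<lambda>p. Complex (fst p) (snd p)) ` cbox (a1, a2) (b1, b2)"
  proof
    fix z assume "z \<in> cbox (Complex a1 a2) (Complex b1 b2)"
    then have "(Re z, Im z) \<in> cbox (a1, a2) (b1, b2)" "z = (\<lambda>p. Complex (fst p) (snd p)) (Re z, Im z)"
      by (auto simp: cbox_Pair_eq in_cbox_complex_iff)
    then show "z \<in> (\<lambda>p. Complex (fst p) (snd p)) ` cbox (a1, a2) (b1, b2)" by blast
  qed
qed

lemma content_cbox_complex:
  "Henstock_Kurzweil_Integration.content (cbox u v) = Henstock_Kurzweil_Integration.content (cbox (Re u, Im u) (Re v, Im v))"
proof (cases "Re u \<le> Re v \<and> Im u \<le> Im v")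
  case True
  have ne: "cbox u v \<noteq> {}" using True by (auto simp: in_cbox_complex_iff intro!: exI[of _ u])
  have "Henstock_Kurzweil_Integration.content (cbox u v) = (\<Prod>i\<in>Basis. v\<bullet>i - u\<bullet>i)" using ne by (simp add: content_cbox_if)
  also have "\<dots> = (Re v - Re u) * (Im v - Im u)" by (simp add: Basis_complex_def)
  also have "\<dots> = Henstock_Kurzweil_Integration.content (cbox (Re u, Im u) (Re v, Im v))"
    using True by (simp add: content_Pair content_real)
  finally show ?thesis .
next
  case False
  then have "cbox u v = {}" by (auto simp: in_cbox_complex_iff)
  moreover have "cbox (Re u, Im u) (Re v, Im v) = {}" using False by (auto simp: cbox_Pair_eq)
  ultimately show ?thesis by simp
qed

lemma integral_complex_box:
  fixes F :: "real \<times> real \<Rightarrow> real"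
  assumes "F integrable_on cbox (a1, a2) (b1, b2)"
  shows "integral (cbox (Complex a1 a2) (Complex b1 b2)) (\<lambda>z. F (Re z, Im z)) = integral (cbox (a1, a2) (b1, b2)) F"
proof -
  have "((\<lambda>z. F ((\<lambda>z. (Re z, Im z)) z)) has_integral (1 / 1) *\<^sub>R integral (cbox (a1, a2) (b1, b2)) F)
         ((\<lambda>p. Complex (fst p) (snd p)) ` cbox (a1, a2) (b1, b2))"
  proof (rule has_integral_twiddle)
    show "\<exists>w z. (\<lambda>z. (Re z, Im z)) ` cbox u v = cbox w z" for u v using g_image_cbox by blast
    show "\<exists>w z. (\<lambda>p. Complex (fst p) (snd p)) ` cbox u v = cbox w z" for u v :: "real \<times> real"
      using h_image_cbox[of "fst u" "snd u" "fst v" "snd v"] by auto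
    show "Henstock_Kurzweil_Integration.content ((\<lambda>z. (Re z, Im z)) ` cbox u v) = 1 * Henstock_Kurzweil_Integration.content (cbox u v)" for u v
      by (simp add: g_image_cbox content_cbox_complex)
    show "continuous (at x) (\<lambda>z. (Re z, Im z))" for x by (intro continuous_intros) (auto intro: bounded_linear.isCont bounded_linear_Re bounded_linear_Im continuous_ident)
  qed (use assms in auto)
  then show ?thesis by (simp add: h_image_cbox integral_unique)
qed

definition P2 :: "nat \<Rightarrow> (nat \<Rightarrow> nat \<Rightarrow> real) \<Rightarrow> complex \<Rightarrow> real" where
  "P2 n c z = (\<Sum>i\<le>n. \<Sum>j\<le>n - i. c i j * Re z ^ i * Im z ^ j)"

lemma P2_x: "P2 n c (Complex u y) = poly (\<Sum>i\<le>n. \<Sum>j\<le>n-i. monom (c i j * y^j) i) u"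
  by (simp add: P2_def poly_sum poly_monom algebra_simps)

lemma P2_x_deg: "degree (\<Sum>i\<le>n. \<Sum>j\<le>n-i. monom (c i j * y^j) i) \<le> n"
  by (intro degree_sum_le) (auto intro: order_trans[OF degree_monom_le])

lemma P2_y: "P2 n c (Complex u v) = poly (\<Sum>i\<le>n. \<Sum>j\<le>n-i. monom (c i j * u^i) j) v"
  by (simp add: P2_def poly_sum poly_monom algebra_simps)

lemma P2_y_deg: "degree (\<Sum>i\<le>n. \<Sum>j\<le>n-i. monom (c i j * u^i) j) \<le> n"
  by (intro degree_sum_le) (auto intro: order_trans[OF degree_monom_le])

lemma P2_cont_pair: "continuous_on S (\<lambda>p. (P2 n c (Complex (fst p) (snd p)))^2)"
  unfolding P2_def by (intro continuous_intros)

lemma P2_cont: "continuous_on S (P2 n c)"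
  unfolding P2_def by (intro continuous_intros)

lemma inv2d:
  fixes c :: "nat \<Rightarrow> nat \<Rightarrow> real" and A l m1 m2 :: real
  assumes A: "A \<ge> 0" and l: "l > 0" and zx: "\<bar>Re z - m1\<bar> \<le> A*l" and zy: "\<bar>Im z - m2\<bar> \<le> A*l"
  shows "(P2 n c z)^2 \<le> (((A+1)*(n+1))^(2*n) * (n+1)^3)^2 / l^2
            * integral (cbox (Complex (m1-l) (m2-l)) (Complex (m1+l) (m2+l))) (\<lambda>w. (P2 n c w)^2)"
proof -
  define L where "L = ((A+1)*(n+1))^(2*n) * (n+1)^3"
  have L0: "0 \<le> L" unfolding L_def using A by simp
  define F where "F p = (P2 n c (Complex (fst p) (snd p)))^2" for p
  have Fc: "continuous_on S F" for S unfolding F_def by (rule P2_cont_pair)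
  define x where "x = Re z"
  define y where "y = Im z"
  have z: "z = Complex x y" unfolding x_def y_def by simp
  define G where "G u = integral {m2-l..m2+l} (\<lambda>v. F (u, v))" for u
  have S1: "F (x, y) \<le> L / l * integral {m1-l..m1+l} (\<lambda>u. F (u, y))"
  proof -
    have "(poly (\<Sum>i\<le>n. \<Sum>j\<le>n-i. monom (c i j * y^j) i) x)^2 \<le> L / l *
            integral {m1-l..m1+l} (\<lambda>t. (poly (\<Sum>i\<le>n. \<Sum>j\<le>n-i. monom (c i j * y^j) i) t)^2)"
      unfolding L_def using inv1d[OF A P2_x_deg l, where x=x and m=m1] zx x_def by simp
    then show ?thesis unfolding F_def by (simp add: P2_x)
  qed
  have S2: "F (u, y) \<le> L / l * G u" for u
  proof -
    have "(poly (\<Sum>i\<le>n. \<Sum>j\<le>n-i. monom (c i j * u^i) j) y)^2 \<le> L / l *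
            integral {m2-l..m2+l} (\<lambda>t. (poly (\<Sum>i\<le>n. \<Sum>j\<le>n-i. monom (c i j * u^i) j) t)^2)"
      unfolding L_def using inv1d[OF A P2_y_deg l, where x=y and m=m2] zy y_def by simp
    then show ?thesis unfolding F_def G_def by (simp add: P2_y)
  qed
  have Gc: "continuous_on UNIV G"
  proof -
    have "continuous_on UNIV (\<lambda>u. integral (cbox (m2-l) (m2+l)) (\<lambda>v. F (u, v)))"
      by (rule integral_continuous_on_param) (simp add: Fc case_prod_unfold)
    then show ?thesis unfolding G_def by simp
  qed
  have S3: "integral {m1-l..m1+l} (\<lambda>u. F (u, y)) \<le> integral {m1-l..m1+l} (\<lambda>u. L / l * G u)"
  proof (rule integral_le)
    show "(\<lambda>u. F (u, y)) integrable_on {m1-l..m1+l}"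
      by (rule integrable_continuous_interval) (rule continuous_on_compose2[OF Fc[of UNIV]]; auto intro!: continuous_intros)
    show "(\<lambda>u. L / l * G u) integrable_on {m1-l..m1+l}"
      by (intro integrable_continuous_interval continuous_intros continuous_on_subset[OF Gc]) auto
  qed (rule S2)
  have S4: "integral {m1-l..m1+l} G = integral (cbox (m1-l, m2-l) (m1+l, m2+l)) F"
    using integral_prod_continuous[OF Fc[of "cbox (m1-l, m2-l) (m1+l, m2+l)"]] unfolding G_def by simp
  have S5: "integral (cbox (m1-l, m2-l) (m1+l, m2+l)) F
            = integral (cbox (Complex (m1-l) (m2-l)) (Complex (m1+l) (m2+l))) (\<lambda>w. (P2 n c w)^2)"
  proof -
    have "integral (cbox (Complex (m1-l) (m2-l)) (Complex (m1+l) (m2+l))) (\<lambda>w. F (Re w, Im w))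
          = integral (cbox (m1-l, m2-l) (m1+l, m2+l)) F"
      by (rule integral_complex_box) (rule integrable_continuous[OF Fc])
    then show ?thesis unfolding F_def by simp
  qed
  have "(P2 n c z)^2 = F (x, y)" unfolding F_def z by simp
  also have "\<dots> \<le> L / l * integral {m1-l..m1+l} (\<lambda>u. L / l * G u)"
    using S1 S3 L0 l by (meson divide_nonneg_pos mult_left_mono order_trans less_imp_le)
  also have "\<dots> = L / l * (L / l * integral {m1-l..m1+l} G)" by simp
  also have "\<dots> = L^2 / l^2 * integral (cbox (m1-l, m2-l) (m1+l, m2+l)) F"
    unfolding S4 by (simp add: power2_eq_square)
  finally show ?thesis unfolding S5 L_def .
qed

lemma polychain_start: "pathstart (polychain (a # L)) = a"
proof (cases L)
  case Nil then show ?thesis by simp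
next
  case (Cons b L') then show ?thesis by (cases L') simp_all
qed

lemma polychain_finish_ok: "pathfinish (linepath a b) = pathstart (polychain (b # L))"
  by (simp add: polychain_start)

lemma polychain_seg:
  "Suc i < length L \<Longrightarrow> closed_segment (L!i) (L!Suc i) \<subseteq> path_image (polychain L)"
proof (induction L arbitrary: i rule: polychain.induct)
  case 1 then show ?case by simp
next
  case (2 a) then show ?case by simp
next
  case (3 a b) then show ?case by simp
next
  case (4 a b c rest)
  have pi: "path_image (polychain (a # b # c # rest)) = closed_segment a b \<union> path_image (polychain (b # c # rest))"
    by (simp add: path_image_join polychain_start)
  show ?case
  proof (cases i)
    case 0 then show ?thesis unfolding pi by simp
  next
    case (Suc i')
    have "closed_segment ((b # c # rest)!i') ((b # c # rest)!Suc i') \<subseteq> path_image (polychain (b # c # rest))"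
      using "4.prems" Suc by (intro "4.IH") simp
    then show ?thesis unfolding pi using Suc by auto
  qed
qed

lemma polychain_path: "path (polychain L)"
  proof (induction L rule: polychain.induct)
  case 1 then show ?case by (simp add: path_def)
next
  case (2 a) then show ?case by (simp add: path_def)
next
  case (3 a b) then show ?case by simp
next
  case (4 a b c rest) then show ?case by (simp add: polychain_start)
qed

lemma edge_in_region:
  assumes "length K \<ge> 1" "(a, b) \<in> edges K"
  shows "closed_segment a b \<subseteq> region K"
proof -
  obtain i where i: "i < length K" "a = K ! i" "b = nxt K i" using assms(2) unfolding edges_def by auto
  have L: "Suc i < length (K @ [hd K])" using i by simp
  have ai: "(K @ [hd K]) ! i = a" using i by (simp add: nth_append)
  have bi: "(K @ [hd K]) ! Suc i = b"
  proof (cases "Suc i < length K")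
    case True then show ?thesis using i by (simp add: nth_append nxt_def)
  next
    case False
    then have "Suc i = length K" using i by simp
    moreover have "K \<noteq> []" using assms by auto
    ultimately show ?thesis using i by (simp add: nth_append nxt_def hd_conv_nth)
  qed
  have "closed_segment a b \<subseteq> path_image (polypath K)"
    unfolding polypath_def using polychain_seg[OF L] ai bi by simp
  then show ?thesis unfolding region_def by auto
qed

lemma region_compact: "compact (region K)"
proof -
  have p: "path (polypath K)" unfolding polypath_def by (rule polychain_path)
  have "closed (region K)" unfolding region_def by (rule closed_path_image_Un_inside[OF p])
  moreover have "bounded (region K)"
  proof -
    have b: "bounded (path_image (polypath K))" by (rule bounded_path_image[OF p])
    then have "bounded (inside (path_image (polypath K)))" by (rule bounded_inside)
    with b show ?thesis unfolding region_def by simp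
  qed
  ultimately show ?thesis by (simp add: compact_eq_bounded_closed)
qed

lemma finite_edges: "finite (edges K)"
proof -
  have "edges K = (\<lambda>i. (K ! i, nxt K i)) ` {..<length K}" unfolding edges_def by auto
  then show ?thesis by simp
qed

lemma edge_distinct:
  assumes "is_ccw_polygon K" "(a, b) \<in> edges K"
  shows "a \<noteq> b"
proof -
  obtain i where i: "i < length K" "a = K ! i" "b = nxt K i" using assms(2) unfolding edges_def by auto
  have d: "distinct K" and l3: "3 \<le> length K" using assms(1) unfolding is_ccw_polygon_def by auto
  have ne: "Suc i mod length K \<noteq> i"
  proof (cases "Suc i < length K")
    case True then show ?thesis by simp
  next
    case False then have "Suc i = length K" using i by simp
    then show ?thesis using l3 by simp
  qed
  have lt: "Suc i mod length K < length K" by (rule mod_less_divisor) (use i in auto)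
  have "K ! i \<noteq> K ! (Suc i mod length K)"
    using nth_eq_iff_index_eq[OF d i(1) lt] ne by auto
  then show ?thesis using i unfolding nxt_def by simp
qed

lemma cont_compact_integrable:
  fixes f :: "complex \<Rightarrow> real"
  assumes "continuous_on S f" "compact S"
  shows "f integrable_on S"
proof -
  have Sl: "S \<in> lmeasurable" using assms(2) by (rule lmeasurable_compact)
  then have Ss: "S \<in> sets lebesgue" by auto
  obtain B where B: "\<And>x. x \<in> S \<Longrightarrow> norm (f x) \<le> B"
    using compact_imp_bounded[OF compact_continuous_image[OF assms]] unfolding bounded_iff by auto
  show ?thesis
  proof (rule measurable_bounded_by_integrable_imp_integrable_real)
    show "f \<in> borel_measurable (lebesgue_on S)"
      by (rule continuous_imp_measurable_on_sets_lebesgue[OF assms(1) Ss])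
    show "(\<lambda>x. B) integrable_on S" using Sl by (rule integrable_on_const)
    show "\<bar>f x\<bar> \<le> B" if "x \<in> S" for x using B[OF that] by simp
  qed (rule Ss)
qed

lemma elem_inverse:
  fixes C1 :: real and n :: nat and K :: elem and ctr :: complex and r :: real
    and c c' :: "nat \<Rightarrow> nat \<Rightarrow> real" and v :: "complex \<Rightarrow> complex"
  assumes C1: "C1 > 0" and sb: "star_ball (region K) ctr r" and rK: "r \<ge> C1 * hK K"
    and v: "\<And>z. z \<in> region K \<Longrightarrow> v z = Complex (P2 n c z) (P2 n c' z)"
  defines "Lam \<equiv> 9 * (((3/C1+1)*(n+1))^(2*n) * (n+1)^3)^2 / C1^2"
  shows "hK K > 0" "(\<lambda>z. (cmod (v z))^2) integrable_on region K"
    "\<And>z. z \<in> region K \<Longrightarrow> (cmod (v z))^2 \<le> Lam / (hK K)^2 * integral (region K) (\<lambda>z. (cmod (v z))^2)"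
proof -
  have r: "r > 0" and ball: "ball ctr r \<subseteq> region K" using sb unfolding star_ball_def by auto
  have cpt: "compact (region K)" by (rule region_compact)
  have bdd: "bounded (region K)" using cpt by (rule compact_imp_bounded)
  have ctrK: "ctr \<in> region K" using ball r by auto
  have c2: "ctr + of_real (r/2) \<in> region K" using ball r by (auto simp: dist_norm)
  have "dist ctr (ctr + of_real (r/2)) \<le> hK K"
    unfolding hK_def by (rule diameter_bounded_bound[OF bdd ctrK c2])
  then have hpos: "r/2 \<le> hK K" using r by (simp add: dist_norm)
  then show hK: "hK K > 0" using r by linarith
  define g where "g z = (P2 n c z)^2 + (P2 n c' z)^2" for z
  have gc: "continuous_on S g" for S unfolding g_def by (intro continuous_intros P2_cont)
  have vg: "(cmod (v z))^2 = g z" if "z \<in> region K" for z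
    using v[OF that] by (simp add: g_def cmod_power2)
  have gint: "g integrable_on region K" by (rule cont_compact_integrable[OF gc cpt])
  show vint: "(\<lambda>z. (cmod (v z))^2) integrable_on region K"
    by (rule integrable_eq[OF gint]) (simp add: vg)
  fix z assume z: "z \<in> region K"
  define l where "l = r / 3"
  have l: "l > 0" using r by (simp add: l_def)
  define A where "A = 3 / C1"
  have A: "A \<ge> 0" using C1 by (simp add: A_def)
  define Q where "Q = cbox (Complex (Re ctr - l) (Im ctr - l)) (Complex (Re ctr + l) (Im ctr + l))"
  have QK: "Q \<subseteq> region K"
  proof
    fix w assume "w \<in> Q"
    then have "\<bar>Re w - Re ctr\<bar> \<le> l" "\<bar>Im w - Im ctr\<bar> \<le> l" unfolding Q_def by (auto simp: in_cbox_complex_iff)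
    then have "cmod (ctr - w) \<le> 2 * l" using cmod_le[of "ctr - w"] by (simp add: abs_minus_commute)
    then have "w \<in> ball ctr r" using r unfolding l_def by (simp add: dist_norm)
    then show "w \<in> region K" using ball by auto
  qed
  have dz: "cmod (z - ctr) \<le> hK K"
    using diameter_bounded_bound[OF bdd z ctrK] unfolding hK_def by (simp add: dist_norm)
  have "hK K \<le> r / C1" using rK C1 by (simp add: field_simps mult.commute)
  also have "\<dots> = A * l" unfolding A_def l_def by simp
  finally have hA: "hK K \<le> A * l" .
  have zx: "\<bar>Re z - Re ctr\<bar> \<le> A * l" using abs_Re_le_cmod[of "z - ctr"] dz hA by simp
  have zy: "\<bar>Im z - Im ctr\<bar> \<le> A * l" using abs_Im_le_cmod[of "z - ctr"] dz hA by simp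
  define L where "L = (((A+1)*(n+1))^(2*n) * (n+1)^3)^2"
  have L0: "L \<ge> 0" unfolding L_def by simp
  have i1: "(P2 n c z)^2 \<le> L / l^2 * integral Q (\<lambda>w. (P2 n c w)^2)"
    unfolding L_def Q_def by (rule inv2d[OF A l zx zy])
  have i2: "(P2 n c' z)^2 \<le> L / l^2 * integral Q (\<lambda>w. (P2 n c' w)^2)"
    unfolding L_def Q_def by (rule inv2d[OF A l zx zy])
  have intQ: "(\<lambda>w. (P2 n c w)^2) integrable_on Q" "(\<lambda>w. (P2 n c' w)^2) integrable_on Q"
    unfolding Q_def by (auto intro!: integrable_continuous continuous_intros P2_cont)
  have "(cmod (v z))^2 = g z" by (rule vg[OF z])
  also have "\<dots> \<le> L / l^2 * (integral Q (\<lambda>w. (P2 n c w)^2) + integral Q (\<lambda>w. (P2 n c' w)^2))"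
    using i1 i2 unfolding g_def by (simp add: distrib_left)
  also have "integral Q (\<lambda>w. (P2 n c w)^2) + integral Q (\<lambda>w. (P2 n c' w)^2) = integral Q g"
    unfolding g_def by (rule integral_add[symmetric]) (rule intQ)+
  finally have e1: "(cmod (v z))^2 \<le> L / l^2 * integral Q g" .
  have "integral Q g \<le> integral (region K) g"
  proof (rule integral_subset_le[OF QK])
    show "g integrable_on Q" unfolding Q_def by (rule integrable_continuous[OF gc])
    show "g integrable_on region K" by (rule gint)
    show "\<forall>x\<in>region K. 0 \<le> g x" unfolding g_def by simp
  qed
  also have "integral (region K) g = integral (region K) (\<lambda>z. (cmod (v z))^2)"
    by (rule Henstock_Kurzweil_Integration.integral_cong) (simp add: vg)
  finally have e2: "integral Q g \<le> integral (region K) (\<lambda>z. (cmod (v z))^2)" .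
  have est: "(cmod (v z))^2 \<le> L / l^2 * integral (region K) (\<lambda>z. (cmod (v z))^2)"
    using L0 l by (intro order_trans[OF e1 mult_left_mono[OF e2]]) auto
  have I0: "0 \<le> integral (region K) (\<lambda>z. (cmod (v z))^2)"
    by (rule integral_nonneg[OF vint]) simp
  have "L / l^2 \<le> Lam / (hK K)^2"
  proof -
    have "L / l^2 = 9 * L / r^2" unfolding l_def by (simp add: power2_eq_square)
    also have "\<dots> \<le> 9 * L / (C1 * hK K)^2"
      using rK hK C1 L0 r by (intro divide_left_mono power_mono mult_pos_pos) auto
    also have "\<dots> = (9 * L / C1^2) / (hK K)^2" by (simp add: power_mult_distrib)
    also have "9 * L / C1^2 \<le> Lam"
      unfolding Lam_def L_def A_def by simp
    finally show ?thesis using hK by (simp add: divide_right_mono)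
  qed
  then show "(cmod (v z))^2 \<le> Lam / (hK K)^2 * integral (region K) (\<lambda>z. (cmod (v z))^2)"
    using est I0 by (meson mult_right_mono order_trans)
qed

lemma borel_to_lebesgue_on:
  fixes f :: "real \<Rightarrow> real"
  assumes "f \<in> borel_measurable borel"
  shows "f \<in> borel_measurable (lebesgue_on S)"
proof -
  have "f \<circ> id \<in> borel_measurable (lebesgue_on S)"
    by (rule measurable_comp[OF id_borel_measurable_lebesgue_on]) (use assms in simp)
  then show ?thesis by simp
qed

lemma inner_cnj: "inner z w = Re (z * cnj w)"
  by (simp add: inner_complex_def)

lemma support_closure:
  assumes ons: "outward_normal_sel \<Omega> nt" and p: "p \<in> frontier \<Omega>" and q: "q \<in> frontier \<Omega>"
  shows "inner (nt p) (q - p) \<le> 0"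
proof -
  have "closed {w. inner (nt p) (w - p) \<le> 0}"
    by (intro closed_Collect_le continuous_intros)
  moreover have "\<Omega> \<subseteq> {w. inner (nt p) (w - p) \<le> 0}" using ons p unfolding outward_normal_sel_def by auto
  ultimately have "closure \<Omega> \<subseteq> {w. inner (nt p) (w - p) \<le> 0}" by (rule closure_minimal[rotated])
  moreover have "q \<in> closure \<Omega>" using q unfolding frontier_def by auto
  ultimately show ?thesis by auto
qed

lemma ntil_integrable:
  fixes V :: "real \<Rightarrow> complex"
  assumes ons: "outward_normal_sel \<Omega> nt" and ab: "a \<noteq> b"
    and Gfr: "\<And>x. x \<in> {0..cmod (b - a)} \<Longrightarrow> Gam gam a b x \<in> frontier \<Omega>"
    and close: "\<And>x. x \<in> {0..cmod (b - a)} \<Longrightarrow> cmod (onormal a b - nt (Gam gam a b x)) < 1"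
    and Vc: "continuous_on UNIV V"
  shows "(\<lambda>t. (inner (V t) (nt (Gam gam a b (cmod (complex_of_real t * (b - a))))))^2) integrable_on {0..1}"
proof -
  define he where "he = cmod (b - a)"
  have he: "he > 0" using ab by (simp add: he_def)
  define u where "u = (b - a) / complex_of_real he"
  have u1: "cmod u = 1" using he unfolding u_def he_def by (simp add: norm_divide)
  have uu: "u * cnj u = 1" using u1 by (simp add: complex_norm_square[symmetric])
  define g where "g = gam (closed_segment a b)"
  define G where "G x = Gam gam a b x" for x
  have Gx: "G x = a + u * (complex_of_real x + \<i> * complex_of_real (g x))" for x
    unfolding G_def Gam_def u_def he_def g_def by simp
  define N where "N x = nt (G x) * cnj u" for x
  have ntN: "nt (G x) = u * N x" for x unfolding N_def using uu by (simp add: algebra_simps)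
  have N1: "cmod (N x) = 1" if "x \<in> {0..he}" for x
  proof -
    have "cmod (nt (G x)) = 1" using ons Gfr[of x] that unfolding outward_normal_sel_def G_def he_def by auto
    then show ?thesis unfolding N_def using u1 by (simp add: norm_mult)
  qed
  have Nneg: "Im (N x) < 0" if "x \<in> {0..he}" for x
  proof -
    have "onormal a b = - \<i> * u" unfolding onormal_def u_def he_def by simp
    then have "onormal a b - nt (G x) = u * (- \<i> - N x)" using ntN[of x] by (simp add: algebra_simps)
    then have "cmod (- \<i> - N x) < 1" using close[of x] that u1 unfolding G_def he_def by (simp add: norm_mult)
    moreover have "\<bar>Im (N x) + 1\<bar> \<le> cmod (- \<i> - N x)"
      using abs_Im_le_cmod[of "- \<i> - N x"] by (simp add: abs_minus_commute)
    ultimately show ?thesis by linarith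
  qed
  have supp: "Re (N x) * (y - x) + Im (N x) * (g y - g x) \<le> 0" if "x \<in> {0..he}" "y \<in> {0..he}" for x y
  proof -
    define d where "d = complex_of_real (y - x) + \<i> * complex_of_real (g y - g x)"
    have f1: "inner (nt (G x)) (G y - G x) \<le> 0"
      using support_closure[OF ons Gfr Gfr] that unfolding G_def he_def by blast
    have f2: "G y - G x = u * d"
      unfolding Gx d_def by (simp add: algebra_simps)
    have f3: "inner (u * N x) (u * w) = inner (N x) w" for w
    proof -
      have "inner (u * N x) (u * w) = Re (u * N x * cnj (u * w))" by (rule inner_cnj)
      also have "\<dots> = Re ((u * cnj u) * (N x * cnj w))"
      proof -
        have "u * N x * cnj (u * w) = (u * cnj u) * (N x * cnj w)" by (simp only: complex_cnj_mult ac_simps)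
        then show ?thesis by (rule arg_cong)
      qed
      also have "\<dots> = inner (N x) w" using uu by (simp add: inner_cnj)
      finally show ?thesis .
    qed
    have "inner (N x) d = inner (nt (G x)) (G y - G x)" by (simp only: f2 ntN f3)
    also have "inner (N x) d = Re (N x) * (y - x) + Im (N x) * (g y - g x)"
      unfolding d_def by (simp add: inner_complex_def)
    finally show ?thesis using f1 by simp
  qed
  define \<sigma> where "\<sigma> x = Re (N x) / (- Im (N x))" for x
  have smono: "\<sigma> x \<le> \<sigma> y" if "x \<in> {0..he}" "y \<in> {0..he}" "x \<le> y" for x y
  proof (cases "x = y")
    case True then show ?thesis by simp
  next
    case False
    then have xy: "x < y" using that by simp
    have nx: "- Im (N x) > 0" "- Im (N y) > 0" using Nneg that by auto
    have "Re (N x) * (y - x) + Im (N x) * (g y - g x) \<le> 0" using supp that by blast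
    then have a1: "\<sigma> x * (y - x) - (g y - g x) \<le> 0"
      using nx(1) unfolding \<sigma>_def by (simp add: field_simps)
    have "Re (N y) * (x - y) + Im (N y) * (g x - g y) \<le> 0" using supp that by blast
    then have a2: "\<sigma> y * (x - y) - (g x - g y) \<le> 0"
      using nx(2) unfolding \<sigma>_def by (simp add: field_simps)
    have "(\<sigma> x - \<sigma> y) * (y - x) \<le> 0" using a1 a2 by (simp add: algebra_simps)
    then show ?thesis using xy by (simp add: mult_le_0_iff)
  qed
  define \<Phi> where "\<Phi> s = Complex s (-1) / complex_of_real (sqrt (1 + s^2))" for s
  have NPhi: "N x = \<Phi> (\<sigma> x)" if "x \<in> {0..he}" for x
  proof -
    define n1 where "n1 = Re (N x)"
    define n2 where "n2 = Im (N x)"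
    have n2: "n2 < 0" using Nneg[OF that] by (simp add: n2_def)
    have nn: "n1^2 + n2^2 = 1" using N1[OF that] unfolding n1_def n2_def by (simp add: cmod_power2[symmetric])
    have s: "\<sigma> x = n1 / (- n2)" unfolding \<sigma>_def n1_def n2_def by simp
    have "1 + (n1 / (- n2))^2 = 1 / n2^2" using n2 nn by (simp add: field_simps power2_eq_square)
    then have sq: "sqrt (1 + (\<sigma> x)^2) = - 1 / n2" using n2 s by (simp add: real_sqrt_divide)
    have "\<Phi> (\<sigma> x) = Complex (n1 / (- n2)) (-1) / complex_of_real (- 1 / n2)"
      unfolding \<Phi>_def sq unfolding s ..
    also have "\<dots> = Complex n1 n2" using n2 by (simp add: complex_eq_iff field_simps)
    also have "\<dots> = N x" unfolding n1_def n2_def by simp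
    finally show ?thesis by simp
  qed
  define \<sigma>' where "\<sigma>' x = \<sigma> (max 0 (min he x))" for x
  have smono': "mono \<sigma>'"
    unfolding mono_def \<sigma>'_def using he by (intro allI impI smono) auto
  have sb: "\<sigma>' \<in> borel_measurable borel" by (rule borel_measurable_mono[OF smono'])
  define H where "H t = (inner (V t) (u * \<Phi> (\<sigma>' (t * he))))^2" for t
  have Phic: "continuous_on UNIV \<Phi>"
  proof -
    have "1 + s^2 \<noteq> 0" for s :: real by (metis add_pos_nonneg less_numeral_extra(1) zero_le_power2 less_irrefl)
    then show ?thesis unfolding \<Phi>_def by (intro continuous_intros) (auto simp: complex_eq_iff)
  qed
  have Hb: "H \<in> borel_measurable borel"
  proof -
    have Vb: "V \<in> borel_measurable borel" by (rule borel_measurable_continuous_onI[OF Vc])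
    have "(\<lambda>t. \<sigma>' (t * he)) \<in> borel_measurable borel" using sb by measurable
    then have "(\<lambda>t. \<Phi> (\<sigma>' (t * he))) \<in> borel_measurable borel"
      by (rule borel_measurable_continuous_on[OF Phic])
    then have "(\<lambda>t. u * \<Phi> (\<sigma>' (t * he))) \<in> borel_measurable borel" by measurable
    then show ?thesis unfolding H_def using Vb by measurable
  qed
  have eq: "H t = (inner (V t) (nt (Gam gam a b (cmod (complex_of_real t * (b - a))))))^2"
    if t: "t \<in> {0..1}" for t
  proof -
    have c: "cmod (complex_of_real t * (b - a)) = t * he" using t unfolding he_def by (simp add: norm_mult)
    have x: "t * he \<in> {0..he}" using t he by (auto simp: mult_le_cancel_right1)
    then have "\<sigma>' (t * he) = \<sigma> (t * he)" unfolding \<sigma>'_def by simp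
    then have "u * \<Phi> (\<sigma>' (t * he)) = nt (G (t * he))" using NPhi[OF x] ntN by simp
    then show ?thesis unfolding H_def c G_def by simp
  qed
  have "bounded (V ` {0..1})"
    by (rule compact_imp_bounded[OF compact_continuous_image[OF continuous_on_subset[OF Vc] compact_Icc]]) simp
  then obtain B where B: "\<forall>t\<in>{0..1}. norm (V t) \<le> B"
    unfolding bounded_iff by blast
  have Hint: "H integrable_on {0..1}"
  proof (rule measurable_bounded_by_integrable_imp_integrable_real)
    show "H \<in> borel_measurable (lebesgue_on {0..1})" by (rule borel_to_lebesgue_on[OF Hb])
    show "(\<lambda>t::real. B^2) integrable_on {0..1::real}" by (rule integrable_const_ivl)
    show "\<bar>H t\<bar> \<le> B^2" if t: "t \<in> {0..1}" for t
    proof -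
      have p1: "cmod (\<Phi> s) = 1" for s
      proof -
        have "cmod (Complex s (-1)) = sqrt (1 + s^2)" by (simp add: cmod_def)
        moreover have "sqrt (1 + s^2) > 0" by (simp add: add_pos_nonneg)
        ultimately show ?thesis unfolding \<Phi>_def by (simp add: norm_divide)
      qed
      have "\<bar>inner (V t) (u * \<Phi> (\<sigma>' (t * he)))\<bar> \<le> norm (V t) * norm (u * \<Phi> (\<sigma>' (t * he)))"
        by (rule Cauchy_Schwarz_ineq2)
      also have "\<dots> = norm (V t)" using u1 p1 by (simp add: norm_mult)
      also have "\<dots> \<le> B" using B t by blast
      finally have "\<bar>inner (V t) (u * \<Phi> (\<sigma>' (t * he)))\<bar> \<le> B" .
      then show ?thesis unfolding H_def by (simp add: abs_le_square_iff power2_le_iff_abs_le)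
    qed
  qed auto
  show ?thesis by (rule integrable_eq[OF Hint]) (rule eq)
qed

lemma integral_nonneg_any:
  fixes f :: "real \<Rightarrow> real"
  assumes "\<And>t. t \<in> S \<Longrightarrow> 0 \<le> f t"
  shows "0 \<le> integral S f"
proof (cases "f integrable_on S")
  case True then show ?thesis using assms by (rule integral_nonneg)
next
  case False then show ?thesis by (simp add: not_integrable_integral)
qed

lemma edge_int_nonneg:
  assumes "\<And>t. t \<in> {0..1} \<Longrightarrow> 0 \<le> f (a + complex_of_real t * (b - a))"
  shows "0 \<le> edge_int a b f"
  unfolding edge_int_def using integral_nonneg_any[of "{0..1}", OF assms] by simp

lemma edge_int_le:
  assumes "\<And>t. t \<in> {0..1} \<Longrightarrow> f (a + complex_of_real t * (b - a)) \<le> B" "B \<ge> 0"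
  shows "edge_int a b f \<le> cmod (b - a) * B"
proof -
  have "integral {0..1} (\<lambda>t. f (a + complex_of_real t * (b - a))) \<le> B"
  proof (cases "(\<lambda>t. f (a + complex_of_real t * (b - a))) integrable_on {0..1::real}")
    case True
    have "integral {0..1} (\<lambda>t. f (a + complex_of_real t * (b - a))) \<le> integral {0..1::real} (\<lambda>t. B)"
      by (rule integral_le[OF True]) (use assms in auto)
    then show ?thesis by simp
  next
    case False then show ?thesis using assms(2) by (simp add: not_integrable_integral)
  qed
  then show ?thesis unfolding edge_int_def by (simp add: mult_left_mono)
qed

lemma edge_int_comb:
  assumes f0: "\<And>t. t \<in> {0..1} \<Longrightarrow> 0 \<le> f (a + complex_of_real t * (b - a))"
    and g0: "\<And>t. t \<in> {0..1} \<Longrightarrow> 0 \<le> g (a + complex_of_real t * (b - a))"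
    and gi: "(\<lambda>t. g (a + complex_of_real t * (b - a))) integrable_on {0..1}"
    and fg: "\<And>t. t \<in> {0..1} \<Longrightarrow> f (a + complex_of_real t * (b - a)) \<le> 2 * g (a + complex_of_real t * (b - a)) + B"
    and B: "B \<ge> 0"
  shows "edge_int a b f \<le> 2 * edge_int a b g + cmod (b - a) * B"
proof -
  have gI: "0 \<le> integral {0..1} (\<lambda>t. g (a + complex_of_real t * (b - a)))"
    using integral_nonneg_any[of "{0..1}", OF g0] by simp
  have "integral {0..1} (\<lambda>t. f (a + complex_of_real t * (b - a)))
        \<le> 2 * integral {0..1} (\<lambda>t. g (a + complex_of_real t * (b - a))) + B"
  proof (cases "(\<lambda>t. f (a + complex_of_real t * (b - a))) integrable_on {0..1::real}")
    case True
    have i2: "(\<lambda>t. 2 * g (a + complex_of_real t * (b - a)) + B) integrable_on {0..1::real}"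
    proof (rule integrable_add)
      show "(\<lambda>t. 2 * g (a + complex_of_real t * (b - a))) integrable_on {0..1::real}" using gi by simp
    qed (rule integrable_const_ivl)
    have "integral {0..1} (\<lambda>t. f (a + complex_of_real t * (b - a)))
          \<le> integral {0..1::real} (\<lambda>t. 2 * g (a + complex_of_real t * (b - a)) + B)"
      by (rule integral_le[OF True i2]) (use fg in auto)
    also have "\<dots> = 2 * integral {0..1} (\<lambda>t. g (a + complex_of_real t * (b - a))) + B"
    proof -
      have i1: "(\<lambda>t. 2 * g (a + complex_of_real t * (b - a))) integrable_on {0..1::real}" using gi by simp
      have "integral {0..1::real} (\<lambda>t. 2 * g (a + complex_of_real t * (b - a)) + B)
            = integral {0..1::real} (\<lambda>t. 2 * g (a + complex_of_real t * (b - a))) + integral {0..1::real} (\<lambda>t. B)"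
        by (rule integral_add[OF i1 integrable_const_ivl])
      then show ?thesis by simp
    qed
    finally show ?thesis .
  next
    case False then show ?thesis using gI B by (simp add: not_integrable_integral)
  qed
  then have "cmod (b - a) * integral {0..1} (\<lambda>t. f (a + complex_of_real t * (b - a)))
        \<le> cmod (b - a) * (2 * integral {0..1} (\<lambda>t. g (a + complex_of_real t * (b - a))) + B)"
    by (simp add: mult_left_mono)
  then show ?thesis unfolding edge_int_def by (simp add: algebra_simps)
qed

lemma inner_sq_le:
  fixes w d :: complex
  assumes "(cmod w)^2 \<le> V" "cmod d \<le> D"
  shows "(inner w d)^2 \<le> V * D^2"
proof -
  have "\<bar>inner w d\<bar> \<le> cmod w * cmod d" by (rule Cauchy_Schwarz_ineq2)
  then have "(inner w d)^2 \<le> (cmod w * cmod d)^2"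
    using abs_le_square_iff[of "inner w d" "cmod w * cmod d"] by simp
  also have "\<dots> = (cmod w)^2 * (cmod d)^2" by (simp add: power_mult_distrib)
  also have "\<dots> \<le> V * D^2"
  proof -
    have V0: "0 \<le> V" using assms(1) by (meson order_trans zero_le_power2)
    show ?thesis using assms V0 by (intro mult_mono power_mono) auto
  qed
  finally show ?thesis .
qed

lemma edge_term_bounds:
  fixes w nn :: "complex \<Rightarrow> complex"
  assumes Vb: "\<And>t. t \<in> {0..1} \<Longrightarrow> (cmod (w (a + complex_of_real t * (b - a))))^2 \<le> V"
    and n1: "\<And>t. t \<in> {0..1} \<Longrightarrow> cmod (nn (a + complex_of_real t * (b - a))) \<le> 1"
    and V: "V \<ge> 0"
  shows "0 \<le> edge_int a b (\<lambda>z. (inner (w z) (nn z))^2)"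
    "edge_int a b (\<lambda>z. (inner (w z) (nn z))^2) \<le> cmod (b - a) * V"
proof -
  show "0 \<le> edge_int a b (\<lambda>z. (inner (w z) (nn z))^2)" by (rule edge_int_nonneg) simp
  show "edge_int a b (\<lambda>z. (inner (w z) (nn z))^2) \<le> cmod (b - a) * V"
  proof (rule edge_int_le[OF _ V])
    fix t :: real assume t: "t \<in> {0..1}"
    have "(inner (w (a + complex_of_real t * (b - a))) (nn (a + complex_of_real t * (b - a))))^2 \<le> V * 1^2"
      by (rule inner_sq_le[OF Vb[OF t] n1[OF t]])
    then show "(inner (w (a + complex_of_real t * (b - a))) (nn (a + complex_of_real t * (b - a))))^2 \<le> V" by simp
  qed
qed

lemma edge_term_compare:
  fixes w na nb :: "complex \<Rightarrow> complex"
  assumes Vb: "\<And>t. t \<in> {0..1} \<Longrightarrow> (cmod (w (a + complex_of_real t * (b - a))))^2 \<le> V"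
    and d: "\<And>t. t \<in> {0..1} \<Longrightarrow> cmod (na (a + complex_of_real t * (b - a)) - nb (a + complex_of_real t * (b - a))) \<le> D"
    and gi: "(\<lambda>t. (inner (w (a + complex_of_real t * (b - a))) (nb (a + complex_of_real t * (b - a))))^2) integrable_on {0..1}"
    and V: "V \<ge> 0"
  shows "edge_int a b (\<lambda>z. (inner (w z) (na z))^2) \<le> 2 * edge_int a b (\<lambda>z. (inner (w z) (nb z))^2) + cmod (b - a) * (2 * V * D^2)"
proof -
  have sq: "(x + y)^2 \<le> 2 * x^2 + 2 * y^2" for x y :: real
  proof -
    have "0 \<le> (x - y)^2" by simp
    then show ?thesis by (simp add: power2_eq_square algebra_simps)
  qed
  have fg: "(inner (w (a + complex_of_real t * (b - a))) (na (a + complex_of_real t * (b - a))))^2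
        \<le> 2 * (inner (w (a + complex_of_real t * (b - a))) (nb (a + complex_of_real t * (b - a))))^2 + 2 * V * D^2"
    if t: "t \<in> {0..1}" for t
  proof -
    define z where "z = a + complex_of_real t * (b - a)"
    have e: "inner (w z) (na z) = inner (w z) (nb z) + inner (w z) (na z - nb z)"
      by (simp add: inner_diff_right)
    have "(inner (w z) (na z - nb z))^2 \<le> V * D^2"
      by (rule inner_sq_le) (use Vb[OF t] d[OF t] in \<open>simp_all add: z_def\<close>)
    moreover have "(inner (w z) (na z))^2 \<le> 2 * (inner (w z) (nb z))^2 + 2 * (inner (w z) (na z - nb z))^2"
      unfolding e by (rule sq)
    ultimately have "(inner (w z) (na z))^2 \<le> 2 * (inner (w z) (nb z))^2 + 2 * V * D^2" by linarith
    then show ?thesis unfolding z_def .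
  qed
  show ?thesis
    by (rule edge_int_comb[OF _ _ gi fg]) (use V in auto)
qed

lemma edge_main:
  fixes W m :: "complex \<Rightarrow> complex" and a b :: complex
  assumes h: "h > 0" and he: "cmod (b - a) \<le> h"
    and A0: "A \<ge> 0" and Lam0: "Lam \<ge> 0" and C3: "C3 > 0" and C4': "C4' > 0"
    and Wb: "\<And>t. t \<in> {0..1} \<Longrightarrow> (cmod (W (a + complex_of_real t * (b - a))))^2 \<le> Lam / h^2 * A"
    and n1: "cmod (onormal a b) = 1"
    and m1: "\<And>t. t \<in> {0..1} \<Longrightarrow> cmod (m (a + complex_of_real t * (b - a))) = 1"
    and s0: "0 \<le> s" and sh: "s \<le> C3 * h"
    and fine_d: "C4' * s < 1/2 \<Longrightarrow> (\<And>t. t \<in> {0..1} \<Longrightarrow> cmod (onormal a b - m (a + complex_of_real t * (b - a))) \<le> C4' * s)"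
    and fine_i: "C4' * s < 1/2 \<Longrightarrow> (\<lambda>t. (inner (W (a + complex_of_real t * (b - a))) (m (a + complex_of_real t * (b - a))))^2) integrable_on {0..1}"
    and oi: "(\<lambda>t. (inner (W (a + complex_of_real t * (b - a))) (onormal a b))^2) integrable_on {0..1}"
  defines "E0 \<equiv> edge_int a b (\<lambda>z. (inner (W z) (onormal a b))^2)"
    and "E1 \<equiv> edge_int a b (\<lambda>z. (inner (W z) (m z))^2)"
  shows "(1 / h) * E0 \<le> 2 * ((1 / h) * E1) + 4 * C3^2 * C4'^2 * Lam * A"
    "(1 / h) * E1 \<le> 2 * ((1 / h) * E0) + 4 * C3^2 * C4'^2 * Lam * A"
proof -
  define V where "V = Lam / h^2 * A"
  have V0: "V \<ge> 0" unfolding V_def using A0 Lam0 h by simp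
  have Wb': "\<And>t. t \<in> {0..1} \<Longrightarrow> (cmod (W (a + complex_of_real t * (b - a))))^2 \<le> V"
    unfolding V_def by (rule Wb)
  have E0b: "0 \<le> E0" "E0 \<le> cmod (b - a) * V"
    unfolding E0_def using edge_term_bounds[where w=W and nn="\<lambda>z. onormal a b", OF Wb' _ V0] n1 by auto
  have E1b: "0 \<le> E1" "E1 \<le> cmod (b - a) * V"
    unfolding E1_def using edge_term_bounds[where w=W and nn=m, OF Wb' _ V0] m1 by auto
  define L where "L = 4 * C3^2 * C4'^2 * Lam * A"
  have L0: "L \<ge> 0" unfolding L_def using A0 Lam0 by simp
  have hV: "(1 / h) * (cmod (b - a) * V) \<le> V"
  proof -
    have "(1 / h) * (cmod (b - a) * V) \<le> (1 / h) * (h * V)"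
      using he V0 h by (intro mult_left_mono mult_right_mono) auto
    then show ?thesis using h by simp
  qed
  have "(1 / h) * E0 \<le> 2 * ((1 / h) * E1) + L \<and> (1 / h) * E1 \<le> 2 * ((1 / h) * E0) + L"
  proof (cases "C4' * s < 1/2")
    case False
    then have "1/2 \<le> C4' * s" by simp
    also have "\<dots> \<le> C4' * (C3 * h)" using sh C4' by simp
    finally have "1 \<le> 2 * C3 * C4' * h" by (simp add: algebra_simps)
    then have "1 \<le> (2 * C3 * C4' * h)^2" by (simp add: one_le_power)
    then have hh: "1 / h^2 \<le> 4 * C3^2 * C4'^2" using h by (simp add: field_simps power_mult_distrib)
    have VL: "V \<le> L"
    proof -
      have "V = (1 / h^2) * (Lam * A)" unfolding V_def by simp
      also have "\<dots> \<le> (4 * C3^2 * C4'^2) * (Lam * A)"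
        using hh A0 Lam0 by (intro mult_right_mono) auto
      finally show ?thesis unfolding L_def by (simp add: algebra_simps)
    qed
    have a1: "(1 / h) * E0 \<le> L"
    proof -
      have "(1 / h) * E0 \<le> (1 / h) * (cmod (b - a) * V)" using E0b h by (intro mult_left_mono) auto
      then show ?thesis using hV VL by linarith
    qed
    have a2: "(1 / h) * E1 \<le> L"
    proof -
      have "(1 / h) * E1 \<le> (1 / h) * (cmod (b - a) * V)" using E1b h by (intro mult_left_mono) auto
      then show ?thesis using hV VL by linarith
    qed
    have "0 \<le> (1 / h) * E0" "0 \<le> (1 / h) * E1" using E0b E1b h by auto
    then show ?thesis using a1 a2 by linarith
  next
    case True
    define dd where "dd = C4' * s"
    have dd0: "0 \<le> dd" unfolding dd_def using s0 C4' by simp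
    have ddh: "dd \<le> C4' * C3 * h" unfolding dd_def using sh C4' by (simp add: mult.assoc)
    have d1: "cmod (onormal a b - m (a + complex_of_real t * (b - a))) \<le> dd" if "t \<in> {0..1}" for t
      unfolding dd_def using fine_d[OF True that] .
    have d2: "cmod (m (a + complex_of_real t * (b - a)) - onormal a b) \<le> dd" if "t \<in> {0..1}" for t
      using d1[OF that] by (simp add: norm_minus_commute)
    have c1: "E0 \<le> 2 * E1 + cmod (b - a) * (2 * V * dd^2)"
      unfolding E0_def E1_def
      by (rule edge_term_compare[where na="\<lambda>z. onormal a b" and nb=m, OF _ _ fine_i[OF True] V0])
         (use Wb' d1 in auto)
    have c2: "E1 \<le> 2 * E0 + cmod (b - a) * (2 * V * dd^2)"
      unfolding E0_def E1_def
      by (rule edge_term_compare[where na=m and nb="\<lambda>z. onormal a b", OF _ _ oi V0])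
         (use Wb' d2 in auto)
    have R: "(1 / h) * (cmod (b - a) * (2 * V * dd^2)) \<le> L"
    proof -
      have q: "(1 / h) * cmod (b - a) \<le> 1" using he h by (simp add: field_simps)
      have X0: "0 \<le> 2 * V * dd^2" using V0 by simp
      have "(1 / h) * (cmod (b - a) * (2 * V * dd^2)) = ((1 / h) * cmod (b - a)) * (2 * V * dd^2)"
        by (simp only: mult.assoc)
      also have "\<dots> \<le> 2 * V * dd^2"
        by (rule mult_left_le_one_le[OF X0 _ q]) (use h in simp)
      finally have "(1 / h) * (cmod (b - a) * (2 * V * dd^2)) \<le> 2 * V * dd^2" .
      also have "\<dots> \<le> 2 * V * (C4' * C3 * h)^2"
        using V0 dd0 ddh by (intro mult_left_mono power_mono) auto
      also have "\<dots> = 2 * C4'^2 * C3^2 * Lam * A"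
        unfolding V_def using h by (simp add: field_simps power_mult_distrib power2_eq_square)
      also have "\<dots> \<le> L" unfolding L_def using A0 Lam0 by (simp add: mult_right_mono)
      finally show ?thesis .
    qed
    have "(1 / h) * E0 \<le> (1 / h) * (2 * E1 + cmod (b - a) * (2 * V * dd^2))"
      using c1 h by (intro mult_left_mono) auto
    moreover have "(1 / h) * E1 \<le> (1 / h) * (2 * E0 + cmod (b - a) * (2 * V * dd^2))"
      using c2 h by (intro mult_left_mono) auto
    ultimately show ?thesis using R by (simp add: distrib_left)
  qed
  then show "(1 / h) * E0 \<le> 2 * ((1 / h) * E1) + 4 * C3^2 * C4'^2 * Lam * A"
    "(1 / h) * E1 \<le> 2 * ((1 / h) * E0) + 4 * C3^2 * C4'^2 * Lam * A"
    unfolding L_def by auto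
qed

lemma seg_point:
  assumes "t \<in> {0..1::real}"
  shows "a + complex_of_real t * (b - a) \<in> closed_segment a b"
proof -
  have "a + complex_of_real t * (b - a) = (1 - t) *\<^sub>R a + t *\<^sub>R b"
    by (simp add: scaleR_conv_of_real algebra_simps)
  then show ?thesis unfolding in_segment using assms by auto
qed

lemma edge_apply:
  fixes v0K :: "complex \<Rightarrow> complex" and a b :: complex
  assumes ons: "outward_normal_sel \<Omega> nt"
    and Kp: "is_ccw_polygon K" and ab: "(a, b) \<in> edges K"
    and hK: "hK K > 0"
    and inv: "\<And>z. z \<in> region K \<Longrightarrow> (cmod (v0K z))^2 \<le> Lam / (hK K)^2 * AK"
    and AK: "AK \<ge> 0" and Lam0: "Lam \<ge> 0"
    and poly: "\<And>z. z \<in> region K \<Longrightarrow> v0K z = Complex (P2 n c z) (P2 n c' z)"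
    and vb0: "\<And>z. closed_segment a b \<in> bedges T \<Longrightarrow> z \<in> closed_segment a b \<Longrightarrow> vb (closed_segment a b) z = 0"
    and a4: "\<And>x. closed_segment a b \<in> bedges T \<Longrightarrow> x \<in> {0..cmod (b - a)} \<Longrightarrow>
              Gam gam a b x \<in> frontier \<Omega> \<and> cmod (onormal a b - nt (Gam gam a b x)) \<le> C4' * smax T"
    and sm: "closed_segment a b \<in> bedges T \<Longrightarrow> 0 \<le> smax T \<and> smax T \<le> C3 * hK K"
    and C3: "C3 > 0" and C4': "C4' > 0"
  shows "(1 / hK K) * edge_int a b (\<lambda>z. (inner (v0K z - complex_of_real (vb (closed_segment a b) z) * ne (closed_segment a b)) (onormal a b))^2)
         \<le> 2 * ((1 / hK K) * edge_int a b (\<lambda>z. (inner (v0K z - complex_of_real (vb (closed_segment a b) z) * ne (closed_segment a b)) (ntil T nt gam a b z))^2))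
           + (if closed_segment a b \<in> bedges T then 4 * C3^2 * C4'^2 * Lam * AK else 0)"
    "(1 / hK K) * edge_int a b (\<lambda>z. (inner (v0K z - complex_of_real (vb (closed_segment a b) z) * ne (closed_segment a b)) (ntil T nt gam a b z))^2)
         \<le> 2 * ((1 / hK K) * edge_int a b (\<lambda>z. (inner (v0K z - complex_of_real (vb (closed_segment a b) z) * ne (closed_segment a b)) (onormal a b))^2))
           + (if closed_segment a b \<in> bedges T then 4 * C3^2 * C4'^2 * Lam * AK else 0)"
proof -
  define W where "W z = v0K z - complex_of_real (vb (closed_segment a b) z) * ne (closed_segment a b)" for z
  define E0 where "E0 = edge_int a b (\<lambda>z. (inner (W z) (onormal a b))^2)"
  define E1 where "E1 = edge_int a b (\<lambda>z. (inner (W z) (ntil T nt gam a b z))^2)"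
  have E0n: "0 \<le> E0" unfolding E0_def by (rule edge_int_nonneg) simp
  have E1n: "0 \<le> E1" unfolding E1_def by (rule edge_int_nonneg) simp
  have hi: "0 \<le> 1 / hK K" using hK by simp
  have "(1 / hK K) * E0 \<le> 2 * ((1 / hK K) * E1) + (if closed_segment a b \<in> bedges T then 4 * C3^2 * C4'^2 * Lam * AK else 0)
      \<and> (1 / hK K) * E1 \<le> 2 * ((1 / hK K) * E0) + (if closed_segment a b \<in> bedges T then 4 * C3^2 * C4'^2 * Lam * AK else 0)"
  proof (cases "closed_segment a b \<in> bedges T")
    case False
    have "ntil T nt gam a b z = onormal a b" for z unfolding ntil_def using False by simp
    then have "E1 = E0" unfolding E0_def E1_def by simp
    moreover have "0 \<le> (1 / hK K) * E0" using E0n hi by simp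
    ultimately show ?thesis using False by simp
  next
    case True
    have abne: "a \<noteq> b" by (rule edge_distinct[OF Kp ab])
    have segK: "closed_segment a b \<subseteq> region K"
      using Kp ab by (intro edge_in_region) (auto simp: is_ccw_polygon_def)
    have zK: "a + complex_of_real t * (b - a) \<in> region K" if "t \<in> {0..1}" for t
      using seg_point[OF that] segK by auto
    have Wv: "W (a + complex_of_real t * (b - a)) = v0K (a + complex_of_real t * (b - a))" if "t \<in> {0..1}" for t
      unfolding W_def using vb0[OF True seg_point[OF that]] by simp
    have Wb: "(cmod (W (a + complex_of_real t * (b - a))))^2 \<le> Lam / (hK K)^2 * AK" if "t \<in> {0..1}" for t
      using inv[OF zK[OF that]] Wv[OF that] by simp
    have he: "cmod (b - a) \<le> hK K"
    proof -
      have "bounded (region K)" by (rule compact_imp_bounded[OF region_compact])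
      moreover have "a \<in> region K" "b \<in> region K" using segK by auto
      ultimately have "dist a b \<le> diameter (region K)" by (rule diameter_bounded_bound)
      then show ?thesis unfolding hK_def by (simp add: dist_norm norm_minus_commute)
    qed
    have n1: "cmod (onormal a b) = 1" using abne unfolding onormal_def by (simp add: norm_mult norm_divide)
    have cz: "cmod (a + complex_of_real t * (b - a) - a) \<in> {0..cmod (b - a)}" if "t \<in> {0..1}" for t
      using that by (auto simp: norm_mult intro: mult_left_le_one_le)
    have ntz: "ntil T nt gam a b (a + complex_of_real t * (b - a)) = nt (Gam gam a b (cmod (complex_of_real t * (b - a))))" for t
      unfolding ntil_def using True by simp
    have m1: "cmod (ntil T nt gam a b (a + complex_of_real t * (b - a))) = 1" if "t \<in> {0..1}" for t
    proof -
      have "Gam gam a b (cmod (a + complex_of_real t * (b - a) - a)) \<in> frontier \<Omega>"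
        using a4[OF True cz[OF that]] by simp
      then show ?thesis using ons unfolding outward_normal_sel_def ntil_def using True by simp
    qed
    obtain s0: "0 \<le> smax T" and sh: "smax T \<le> C3 * hK K" using sm[OF True] by blast
    define V where "V t = Complex (P2 n c (a + complex_of_real t * (b - a))) (P2 n c' (a + complex_of_real t * (b - a)))" for t
    have Vc: "continuous_on UNIV V" unfolding V_def
      by (intro continuous_intros continuous_on_compose2[OF P2_cont[of UNIV]]) auto
    have WV: "W (a + complex_of_real t * (b - a)) = V t" if "t \<in> {0..1}" for t
      unfolding V_def using Wv[OF that] poly[OF zK[OF that]] by simp
    have oi: "(\<lambda>t. (inner (W (a + complex_of_real t * (b - a))) (onormal a b))^2) integrable_on {0..1}"
    proof (rule integrable_eq)
      show "(\<lambda>t. (inner (V t) (onormal a b))^2) integrable_on {0..1}"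
        by (intro integrable_continuous_interval continuous_intros continuous_on_subset[OF Vc]) auto
    qed (simp add: WV)
    have fine_d: "cmod (onormal a b - ntil T nt gam a b (a + complex_of_real t * (b - a))) \<le> C4' * smax T"
      if "t \<in> {0..1}" for t
      using a4[OF True cz[OF that]] unfolding ntil_def using True by simp
    have fine_i: "(\<lambda>t. (inner (W (a + complex_of_real t * (b - a))) (ntil T nt gam a b (a + complex_of_real t * (b - a))))^2) integrable_on {0..1}"
      if fine: "C4' * smax T < 1/2"
    proof (rule integrable_eq)
      show "(\<lambda>t. (inner (V t) (nt (Gam gam a b (cmod (complex_of_real t * (b - a))))))^2) integrable_on {0..1}"
      proof (rule ntil_integrable[OF ons abne _ _ Vc])
        show "Gam gam a b x \<in> frontier \<Omega>" if "x \<in> {0..cmod (b - a)}" for x using a4[OF True that] by simp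
        show "cmod (onormal a b - nt (Gam gam a b x)) < 1" if "x \<in> {0..cmod (b - a)}" for x
          using a4[OF True that] fine by simp
      qed
    qed (simp add: WV ntz)
    have r: "(1 / hK K) * E0 \<le> 2 * ((1 / hK K) * E1) + 4 * C3^2 * C4'^2 * Lam * AK \<and>
             (1 / hK K) * E1 \<le> 2 * ((1 / hK K) * E0) + 4 * C3^2 * C4'^2 * Lam * AK"
      unfolding E0_def E1_def
      using edge_main[where W=W and m="ntil T nt gam a b", OF hK he AK Lam0 C3 C4' Wb n1 m1 s0 sh fine_d fine_i oi]
      by simp
    then show ?thesis using True by simp
  qed
  then show "(1 / hK K) * edge_int a b (\<lambda>z. (inner (v0K z - complex_of_real (vb (closed_segment a b) z) * ne (closed_segment a b)) (onormal a b))^2)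
         \<le> 2 * ((1 / hK K) * edge_int a b (\<lambda>z. (inner (v0K z - complex_of_real (vb (closed_segment a b) z) * ne (closed_segment a b)) (ntil T nt gam a b z))^2))
           + (if closed_segment a b \<in> bedges T then 4 * C3^2 * C4'^2 * Lam * AK else 0)"
    "(1 / hK K) * edge_int a b (\<lambda>z. (inner (v0K z - complex_of_real (vb (closed_segment a b) z) * ne (closed_segment a b)) (ntil T nt gam a b z))^2)
         \<le> 2 * ((1 / hK K) * edge_int a b (\<lambda>z. (inner (v0K z - complex_of_real (vb (closed_segment a b) z) * ne (closed_segment a b)) (onormal a b))^2))
           + (if closed_segment a b \<in> bedges T then 4 * C3^2 * C4'^2 * Lam * AK else 0)"
    unfolding E0_def E1_def W_def by auto
qed

lemma edges_len: "(a, b) \<in> edges K \<Longrightarrow> length K \<ge> 1"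
  unfolding edges_def by auto

lemma smax_facts:
  assumes fin: "finite T" and a3: "\<forall>K\<in>T. \<forall>K'\<in>T. hK K' \<le> C3 * hK K" and e: "e \<in> bedges T" and K: "K \<in> T"
  shows "0 \<le> smax T \<and> smax T \<le> C3 * hK K"
proof -
  have Eh: "Eh T \<subseteq> (\<Union>K\<in>T. (\<lambda>(a, b). closed_segment a b) ` edges K)" unfolding Eh_def by auto
  have "finite (\<Union>K\<in>T. (\<lambda>(a, b). closed_segment a b) ` edges K)"
    using fin finite_edges by auto
  then have "finite (Eh T)" using Eh finite_subset by blast
  then have fb: "finite (bedges T)" unfolding bedges_def by simp
  have "smax T \<in> diameter ` bedges T" unfolding smax_def using fb e by (intro Max_in) auto
  then obtain e' where e': "e' \<in> bedges T" "smax T = diameter e'" by auto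
  then obtain a' b' K' where K': "K' \<in> T" "(a', b') \<in> edges K'" "e' = closed_segment a' b'"
    unfolding bedges_def Eh_def by auto
  have "0 \<le> diameter e'" unfolding K'(3) by (rule diameter_ge_0) (rule bounded_closed_segment)
  moreover have "diameter e' \<le> hK K'"
    unfolding K'(3) hK_def
    by (rule diameter_subset[OF edge_in_region[OF edges_len[OF K'(2)] K'(2)] compact_imp_bounded[OF region_compact]])
  moreover have "hK K' \<le> C3 * hK K" using a3 K K'(1) by blast
  ultimately show ?thesis using e'(2) by simp
qed

lemma sum_if_card:
  fixes E :: "'a set" and c :: real
  assumes "finite E"
  shows "(\<Sum>p\<in>E. if Q p then c else 0) = c * card {p \<in> E. Q p}"
proof -
  have "(\<Sum>p\<in>{p \<in> E. Q p}. c) = (\<Sum>p\<in>E. if Q p then c else 0)"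
    by (rule sum.inter_filter[OF assms])
  then show ?thesis by (simp add: mult.commute)
qed

lemma main_bound:
  fixes \<Omega> :: "complex set" and \<alpha> M :: nat and \<rho> C1 C2 C3 C4 C4' C5 C6 C7 :: real
  assumes C1: "C1 > 0" and C3: "C3 > 0" and C4': "C4' > 0" and rho: "\<rho> > 0"
    and ons: "outward_normal_sel \<Omega> nt"
    and mok: "mesh_ok \<Omega> C1 C2 C3 C4 C4' C5 C6 C7 M T ctr rad gam nt"
    and Vs: "Vh_space \<alpha> T v0 vb"
  defines "Lam \<equiv> 9 * (((3/C1+1)*(\<alpha>+1))^(2*\<alpha>) * (\<alpha>+1)^3)^2 / C1^2"
  defines "D \<equiv> 2 + \<rho> * real M * (4 * C3^2 * C4'^2 * Lam)"
  shows "(Vh_norm \<rho> T ne v0 vb)^2 \<le> D * (Vh1_norm nt gam \<rho> T ne v0 vb)^2 \<and>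
         (Vh1_norm nt gam \<rho> T ne v0 vb)^2 \<le> D * (Vh_norm \<rho> T ne v0 vb)^2 \<and>
         0 \<le> Vh_norm \<rho> T ne v0 vb \<and> 0 \<le> Vh1_norm nt gam \<rho> T ne v0 vb"
proof -
  have Lam0: "0 \<le> Lam" unfolding Lam_def by simp
  define L where "L = 4 * C3^2 * C4'^2 * Lam"
  have L0: "0 \<le> L" unfolding L_def using Lam0 by simp
  have finT: "finite T" and polyT: "\<And>K. K \<in> T \<Longrightarrow> is_ccw_polygon K"
    using mok unfolding mesh_ok_def mesh_partition_def by auto
  have a1: "\<And>K. K \<in> T \<Longrightarrow> star_ball (region K) (ctr K) (rad K) \<and> rad K \<ge> C1 * hK K"
    using mok unfolding mesh_ok_def by auto
  have a3: "\<forall>K\<in>T. \<forall>K'\<in>T. hK K' \<le> C3 * hK K"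
    using mok unfolding mesh_ok_def by auto
  have a4: "\<And>K a b x. K \<in> T \<Longrightarrow> (a, b) \<in> edges K \<Longrightarrow> closed_segment a b \<in> bedges T \<Longrightarrow> x \<in> {0..cmod (b - a)} \<Longrightarrow>
              Gam gam a b x \<in> frontier \<Omega> \<and> cmod (onormal a b - nt (Gam gam a b x)) \<le> C4' * smax T"
  proof -
    fix K a b x assume "K \<in> T" "(a, b) \<in> edges K" "closed_segment a b \<in> bedges T" "x \<in> {0..cmod (b - a)}"
    then show "Gam gam a b x \<in> frontier \<Omega> \<and> cmod (onormal a b - nt (Gam gam a b x)) \<le> C4' * smax T"
      using mok unfolding mesh_ok_def Let_def by fast
  qed
  have aM: "\<And>K z. K \<in> T \<Longrightarrow> z \<in> region K \<Longrightarrow> card {(a, b) \<in> edges K. closed_segment a b \<in> bedges T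
                 \<and> z \<in> convex hull {a, b, ctr K}} \<le> M"
    using mok unfolding mesh_ok_def by auto
  have vpoly: "\<And>K. K \<in> T \<Longrightarrow> poly2_on \<alpha> (region K) (\<lambda>z. Re (v0 K z)) \<and> poly2_on \<alpha> (region K) (\<lambda>z. Im (v0 K z))"
    using Vs unfolding Vh_space_def by auto
  have vb0: "\<And>e z. e \<in> bedges T \<Longrightarrow> z \<in> e \<Longrightarrow> vb e z = 0"
    using Vs unfolding Vh_space_def by auto
  define AK where "AK K = integral (region K) (\<lambda>z. (cmod (v0 K z))^2)" for K
  define F0 where "F0 K p = edge_int (fst p) (snd p) (\<lambda>z. (inner (v0 K z - complex_of_real (vb (closed_segment (fst p) (snd p)) z) * ne (closed_segment (fst p) (snd p))) (onormal (fst p) (snd p)))^2)" for K p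
  define F1 where "F1 K p = edge_int (fst p) (snd p) (\<lambda>z. (inner (v0 K z - complex_of_real (vb (closed_segment (fst p) (snd p)) z) * ne (closed_segment (fst p) (snd p))) (ntil T nt gam (fst p) (snd p) z))^2)" for K p
  define S0 where "S0 K = (1 / hK K) * (\<Sum>p\<in>edges K. F0 K p)" for K
  define S1 where "S1 K = (1 / hK K) * (\<Sum>p\<in>edges K. F1 K p)" for K
  have perK: "0 \<le> AK K \<and> 0 \<le> S0 K \<and> 0 \<le> S1 K \<and> S0 K \<le> 2 * S1 K + M * L * AK K \<and> S1 K \<le> 2 * S0 K + M * L * AK K"
    if K: "K \<in> T" for K
  proof -
    have Kp: "is_ccw_polygon K" by (rule polyT[OF K])
    have sb: "star_ball (region K) (ctr K) (rad K)" and rK: "rad K \<ge> C1 * hK K" using a1[OF K] by auto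
    obtain c where c: "\<forall>z\<in>region K. Re (v0 K z) = (\<Sum>i\<le>\<alpha>. \<Sum>j\<le>\<alpha> - i. c i j * Re z ^ i * Im z ^ j)"
      using vpoly[OF K] unfolding poly2_on_def by blast
    obtain c' where c': "\<forall>z\<in>region K. Im (v0 K z) = (\<Sum>i\<le>\<alpha>. \<Sum>j\<le>\<alpha> - i. c' i j * Re z ^ i * Im z ^ j)"
      using vpoly[OF K] unfolding poly2_on_def by blast
    have poly: "v0 K z = Complex (P2 \<alpha> c z) (P2 \<alpha> c' z)" if "z \<in> region K" for z
      using c c' that by (simp add: complex_eq_iff P2_def)
    note EI = elem_inverse[OF C1 sb rK poly]
    have hK: "hK K > 0" by (rule EI(1))
    have inv: "(cmod (v0 K z))^2 \<le> Lam / (hK K)^2 * AK K" if "z \<in> region K" for z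
      using EI(3)[of z] that unfolding Lam_def AK_def by blast
    have AK0: "0 \<le> AK K" unfolding AK_def by (rule integral_nonneg[OF EI(2)]) simp_all
    have ctrK: "ctr K \<in> region K" using sb unfolding star_ball_def by auto
    have edge: "(1 / hK K) * F0 K p \<le> 2 * ((1 / hK K) * F1 K p) + (if closed_segment (fst p) (snd p) \<in> bedges T then L * AK K else 0)
              \<and> (1 / hK K) * F1 K p \<le> 2 * ((1 / hK K) * F0 K p) + (if closed_segment (fst p) (snd p) \<in> bedges T then L * AK K else 0)"
      if p: "p \<in> edges K" for p
    proof -
      have ab: "(fst p, snd p) \<in> edges K" using p by simp
      have vb0': "closed_segment (fst p) (snd p) \<in> bedges T \<Longrightarrow>
          (\<And>z. z \<in> closed_segment (fst p) (snd p) \<Longrightarrow> vb (closed_segment (fst p) (snd p)) z = 0)"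
        using vb0 by blast
      have a4': "closed_segment (fst p) (snd p) \<in> bedges T \<Longrightarrow> (\<And>x. x \<in> {0..cmod (snd p - fst p)} \<Longrightarrow>
          Gam gam (fst p) (snd p) x \<in> frontier \<Omega> \<and> cmod (onormal (fst p) (snd p) - nt (Gam gam (fst p) (snd p) x)) \<le> C4' * smax T)"
        using a4[OF K ab] by blast
      have sm': "0 \<le> smax T \<and> smax T \<le> C3 * hK K" if "closed_segment (fst p) (snd p) \<in> bedges T"
        using smax_facts[OF finT a3 that K] .
      note ea = edge_apply[where v0K="v0 K" and vb=vb and a="fst p" and b="snd p" and ne=ne and T=T and K=K, OF ons Kp ab hK inv AK0 Lam0 poly vb0' a4' sm' C3 C4']
      show ?thesis using ea unfolding F0_def F1_def L_def by simp
    qed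
    have F0n: "0 \<le> F0 K p" for p unfolding F0_def by (rule edge_int_nonneg) simp
    have F1n: "0 \<le> F1 K p" for p unfolding F1_def by (rule edge_int_nonneg) simp
    have fe: "finite (edges K)" by (rule finite_edges)
    have card: "card {p \<in> edges K. closed_segment (fst p) (snd p) \<in> bedges T} \<le> M"
    proof -
      have "{p \<in> edges K. closed_segment (fst p) (snd p) \<in> bedges T} =
            {(a, b) \<in> edges K. closed_segment a b \<in> bedges T \<and> ctr K \<in> convex hull {a, b, ctr K}}"
        by (auto simp: hull_inc)
      then show ?thesis using aM[OF K ctrK] by simp
    qed
    have LA: "0 \<le> L * AK K" using L0 AK0 by simp
    have ifsum: "(\<Sum>p\<in>edges K. if closed_segment (fst p) (snd p) \<in> bedges T then L * AK K else 0) \<le> M * L * AK K"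
    proof -
      have "(\<Sum>p\<in>edges K. if closed_segment (fst p) (snd p) \<in> bedges T then L * AK K else 0)
            = (L * AK K) * card {p \<in> edges K. closed_segment (fst p) (snd p) \<in> bedges T}"
        by (rule sum_if_card[OF fe])
      also have "\<dots> \<le> (L * AK K) * M" using card LA by (intro mult_left_mono) auto
      finally show ?thesis by (simp add: algebra_simps)
    qed
    have sd0: "S0 K = (\<Sum>p\<in>edges K. (1 / hK K) * F0 K p)" unfolding S0_def by (simp add: sum_distrib_left)
    have sd1: "S1 K = (\<Sum>p\<in>edges K. (1 / hK K) * F1 K p)" unfolding S1_def by (simp add: sum_distrib_left)
    have i01: "S0 K \<le> 2 * S1 K + M * L * AK K"
    proof -
      have "S0 K \<le> (\<Sum>p\<in>edges K. 2 * ((1 / hK K) * F1 K p) + (if closed_segment (fst p) (snd p) \<in> bedges T then L * AK K else 0))"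
        unfolding sd0 using edge by (intro sum_mono) auto
      also have "\<dots> = 2 * S1 K + (\<Sum>p\<in>edges K. if closed_segment (fst p) (snd p) \<in> bedges T then L * AK K else 0)"
        unfolding sd1 by (simp add: sum.distrib sum_distrib_left)
      finally show ?thesis using ifsum by linarith
    qed
    have i10: "S1 K \<le> 2 * S0 K + M * L * AK K"
    proof -
      have "S1 K \<le> (\<Sum>p\<in>edges K. 2 * ((1 / hK K) * F0 K p) + (if closed_segment (fst p) (snd p) \<in> bedges T then L * AK K else 0))"
        unfolding sd1 using edge by (intro sum_mono) auto
      also have "\<dots> = 2 * S0 K + (\<Sum>p\<in>edges K. if closed_segment (fst p) (snd p) \<in> bedges T then L * AK K else 0)"
        unfolding sd0 by (simp add: sum.distrib sum_distrib_left)
      finally show ?thesis using ifsum by linarith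
    qed
    have "0 \<le> S0 K" unfolding sd0 using F0n hK by (intro sum_nonneg) simp
    moreover have "0 \<le> S1 K" unfolding sd1 using F1n hK by (intro sum_nonneg) simp
    ultimately show ?thesis using AK0 i01 i10 by simp
  qed
  have sA: "0 \<le> (\<Sum>K\<in>T. AK K)" using perK by (simp add: sum_nonneg)
  have s0: "0 \<le> (\<Sum>K\<in>T. S0 K)" using perK by (simp add: sum_nonneg)
  have s1: "0 \<le> (\<Sum>K\<in>T. S1 K)" using perK by (simp add: sum_nonneg)
  have Xeq0: "Vh_norm \<rho> T ne v0 vb = sqrt ((\<Sum>K\<in>T. AK K) + \<rho> * (\<Sum>K\<in>T. S0 K))"
    unfolding Vh_norm_def Vnorm_with_def AK_def S0_def F0_def by (simp add: case_prod_unfold)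
  have Yeq0: "Vh1_norm nt gam \<rho> T ne v0 vb = sqrt ((\<Sum>K\<in>T. AK K) + \<rho> * (\<Sum>K\<in>T. S1 K))"
    unfolding Vh1_norm_def Vnorm_with_def AK_def S1_def F1_def by (simp add: case_prod_unfold)
  have Xeq: "(Vh_norm \<rho> T ne v0 vb)^2 = (\<Sum>K\<in>T. AK K) + \<rho> * (\<Sum>K\<in>T. S0 K)"
    unfolding Xeq0 using sA s0 rho by simp
  have Yeq: "(Vh1_norm nt gam \<rho> T ne v0 vb)^2 = (\<Sum>K\<in>T. AK K) + \<rho> * (\<Sum>K\<in>T. S1 K)"
    unfolding Yeq0 using sA s1 rho by simp
  have c01: "(\<Sum>K\<in>T. S0 K) \<le> 2 * (\<Sum>K\<in>T. S1 K) + M * L * (\<Sum>K\<in>T. AK K)"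
  proof -
    have "(\<Sum>K\<in>T. S0 K) \<le> (\<Sum>K\<in>T. 2 * S1 K + M * L * AK K)" using perK by (intro sum_mono) auto
    then show ?thesis by (simp add: sum.distrib sum_distrib_left)
  qed
  have c10: "(\<Sum>K\<in>T. S1 K) \<le> 2 * (\<Sum>K\<in>T. S0 K) + M * L * (\<Sum>K\<in>T. AK K)"
  proof -
    have "(\<Sum>K\<in>T. S1 K) \<le> (\<Sum>K\<in>T. 2 * S0 K + M * L * AK K)" using perK by (intro sum_mono) auto
    then show ?thesis by (simp add: sum.distrib sum_distrib_left)
  qed
  have DL: "D = 2 + \<rho> * M * L" unfolding D_def L_def by simp
  have gen: "x + \<rho> * p \<le> D * (x + \<rho> * q)" if "0 \<le> x" "0 \<le> q" "p \<le> 2 * q + M * L * x" for x p q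
  proof -
    have "x + \<rho> * p \<le> x + \<rho> * (2 * q + M * L * x)" using that rho by (simp add: mult_left_mono)
    also have "\<dots> = (1 + \<rho> * M * L) * x + 2 * \<rho> * q" by (simp add: algebra_simps)
    also have "\<dots> \<le> (2 + \<rho> * M * L) * x + (2 + \<rho> * M * L) * (\<rho> * q)"
    proof -
      have "0 \<le> \<rho> * M * L" using rho L0 by simp
      moreover have "0 \<le> \<rho> * q" using that rho by simp
      ultimately have "0 \<le> (\<rho> * M * L) * (\<rho> * q)" by (rule mult_nonneg_nonneg)
      moreover have "(2 + \<rho> * M * L) * (\<rho> * q) = 2 * \<rho> * q + (\<rho> * M * L) * (\<rho> * q)"
        by (simp add: algebra_simps)
      ultimately have "2 * \<rho> * q \<le> (2 + \<rho> * M * L) * (\<rho> * q)" by linarith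
      moreover have "(1 + \<rho> * M * L) * x \<le> (2 + \<rho> * M * L) * x" using that by (simp add: mult_right_mono)
      ultimately show ?thesis by linarith
    qed
    also have "\<dots> = D * (x + \<rho> * q)" unfolding DL by (simp add: algebra_simps)
    finally show ?thesis .
  qed
  have n0: "0 \<le> Vh_norm \<rho> T ne v0 vb" unfolding Xeq0 using sA s0 rho by simp
  have n1: "0 \<le> Vh1_norm nt gam \<rho> T ne v0 vb" unfolding Yeq0 using sA s1 rho by simp
  show ?thesis unfolding Xeq Yeq using gen[OF sA s1 c01] gen[OF sA s0 c10] n0 n1 by simp
qed

lemma sq_to_lin:
  fixes x y D :: real
  assumes "x^2 \<le> D * y^2" "0 \<le> x" "0 \<le> y" "0 \<le> D"
  shows "x \<le> sqrt D * y"
proof -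
  have "x = sqrt (x^2)" using assms(2) by simp
  also have "\<dots> \<le> sqrt (D * y^2)" using assms(1) by (rule real_sqrt_le_mono)
  also have "\<dots> = sqrt D * y" using assms(3) by (simp add: real_sqrt_mult)
  finally show ?thesis .
qed

theorem lemma4p3:
  fixes \<Omega> :: "complex set" and \<alpha> M :: nat
    and \<rho> C1 C2 C3 C4 C4' C5 C6 C7 :: real
  assumes "open \<Omega>" "convex \<Omega>" "bounded \<Omega>" "\<Omega> \<noteq> {}"
    and "\<rho> > 0"
    and "C1 > 0" "C2 > 0" "C3 > 0" "C4 > 0" "C4' > 0" "C5 > 0" "C6 > 0" "C7 > 0"
  shows "\<exists>c C. c > 0 \<and> C > 0 \<and>
    (\<forall>T ctr rad gam nt ne v0 vb.
       outward_normal_sel \<Omega> nt \<and>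
       mesh_ok \<Omega> C1 C2 C3 C4 C4' C5 C6 C7 M T ctr rad gam nt \<and>
       edge_normals T ne \<and> Vh_space \<alpha> T v0 vb \<longrightarrow>
         c * Vh_norm \<rho> T ne v0 vb \<le> Vh1_norm nt gam \<rho> T ne v0 vb \<and>
         Vh1_norm nt gam \<rho> T ne v0 vb \<le> C * Vh_norm \<rho> T ne v0 vb)"
proof -
  define Lam where "Lam = 9 * (((3/C1+1)*(\<alpha>+1))^(2*\<alpha>) * (\<alpha>+1)^3)^2 / C1^2"
  define D where "D = 2 + \<rho> * real M * (4 * C3^2 * C4'^2 * Lam)"
  have Lam0: "0 \<le> Lam" unfolding Lam_def by simp
  have D2: "D \<ge> 2" unfolding D_def using Lam0 assms(5) by simp
  have sD: "sqrt D > 0" using D2 by simp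
  show ?thesis
  proof (rule exI[of _ "1 / sqrt D"], rule exI[of _ "sqrt D"], intro conjI allI impI)
    show "1 / sqrt D > 0" using sD by simp
    show "sqrt D > 0" by (rule sD)
    fix T ctr rad gam nt ne v0 vb
    assume H: "outward_normal_sel \<Omega> nt \<and> mesh_ok \<Omega> C1 C2 C3 C4 C4' C5 C6 C7 M T ctr rad gam nt \<and>
       edge_normals T ne \<and> Vh_space \<alpha> T v0 vb"
    have mb: "(Vh_norm \<rho> T ne v0 vb)^2 \<le> D * (Vh1_norm nt gam \<rho> T ne v0 vb)^2 \<and>
         (Vh1_norm nt gam \<rho> T ne v0 vb)^2 \<le> D * (Vh_norm \<rho> T ne v0 vb)^2 \<and>
         0 \<le> Vh_norm \<rho> T ne v0 vb \<and> 0 \<le> Vh1_norm nt gam \<rho> T ne v0 vb"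
      unfolding D_def Lam_def
      by (rule main_bound[OF assms(6) assms(8) assms(10) assms(5)]) (use H in auto)
    have x1: "Vh_norm \<rho> T ne v0 vb \<le> sqrt D * Vh1_norm nt gam \<rho> T ne v0 vb"
      using mb D2 by (intro sq_to_lin) auto
    show "Vh1_norm nt gam \<rho> T ne v0 vb \<le> sqrt D * Vh_norm \<rho> T ne v0 vb"
      using mb D2 by (intro sq_to_lin) auto
    show "1 / sqrt D * Vh_norm \<rho> T ne v0 vb \<le> Vh1_norm nt gam \<rho> T ne v0 vb"
      using x1 sD by (simp add: field_simps mult.commute)
  qed
qed

end
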